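(* Let $\xi \in \mathbb{R}\setminus\mathbb{Q}$ be badly approximable, and let $n$ be a positive integer. Then there exist positive constants $c_1, c_2, c_3, c_4$, depending only on $\xi$ and $n$, such that for each real number $X \ge 1$: (a) there is an algebraic number $\alpha$ of degree $n$ with $\max_{\bar\alpha} |\xi - \bar\alpha| \le c_1 H(\alpha)^{-2/n}$ (maximum over all conjugates $\bar\alpha$ of $\alpha$) and $c_3 X \le H(\alpha) \le c_4 X$; (b) there is an algebraic integer $\alpha$ of degree $n+1$ with $\max_{\bar\alpha\ne\alpha} |\xi - \bar\alpha| \le c_2 H(\alpha)^{-2/n}$ (maximum over all conjugates $\bar\alpha$ of $\alpha$ different from $\alpha$) and $c_3 X \le H(\alpha) \le c_4 X$.
   Context: An irrational real number $\xi$ is badly approximable if there exists a constant $c>0$ such that $|\xi - p/q| \ge c q^{-2}$ for all rational numbers $p/q$ (with $q\ge1$). The height $H(P)$ of a polynomial $P \in \mathbb{R}[T]$ is the largest absolute value of its coefficients. The height $H(\alpha)$ of an algebraic number $\alpha \in \mathbb{C}$ is the height of its irreducible (minimal) polynomial in $\mathbb{Z}[T]$. Conjugates of $\alpha$ are the roots of its minimal polynomial over $\mathbb{Q}$. *)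

theory Defs
  imports "HOL-Analysis.Analysis" "HOL-Computational_Algebra.Polynomial_Factorial"
begin

definition badly_approximable :: "real \<Rightarrow> bool" where
  "badly_approximable \<xi> \<longleftrightarrow> \<xi> \<notin> \<rat> \<and>
     (\<exists>c>0. \<forall>(p::int) (q::int). q \<ge> 1 \<longrightarrow> \<bar>\<xi> - real_of_int p / real_of_int q\<bar> \<ge> c / (real_of_int q)^2)"

definition poly_height :: "int poly \<Rightarrow> int" where
  "poly_height P = Max ((\<lambda>i. \<bar>coeff P i\<bar>) ` {..degree P})"

definition is_algebraic :: "complex \<Rightarrow> bool" where
  "is_algebraic \<alpha> \<longleftrightarrow> (\<exists>P::int poly. P \<noteq> 0 \<and> poly (map_poly of_int P) \<alpha> = 0)"

definition min_int_poly :: "complex \<Rightarrow> int poly" where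
  "min_int_poly \<alpha> = (SOME P. irreducible P \<and> lead_coeff P > 0 \<and> poly (map_poly of_int P) \<alpha> = 0)"

definition alg_degree :: "complex \<Rightarrow> nat" where
  "alg_degree \<alpha> = degree (min_int_poly \<alpha>)"

definition alg_height :: "complex \<Rightarrow> int" where
  "alg_height \<alpha> = poly_height (min_int_poly \<alpha>)"

definition conjugates :: "complex \<Rightarrow> complex set" where
  "conjugates \<alpha> = {\<beta>. poly (map_poly of_int (min_int_poly \<alpha>)) \<beta> = 0}"

definition algebraic_integer :: "complex \<Rightarrow> bool" where
  "algebraic_integer \<alpha> \<longleftrightarrow> (\<exists>P::int poly. lead_coeff P = 1 \<and> poly (map_poly of_int P) \<alpha> = 0)"

end

theory Submission
  imports Defs "HOL-Computational_Algebra.Fundamental_Theorem_Algebra" "HOL-Analysis.Kronecker_Approximation_Theorem"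
begin


lemma mpi_add: "map_poly (of_int :: int \<Rightarrow> 'a::comm_ring_1) (A + B) = map_poly of_int A + map_poly of_int B"
  by (rule poly_eqI) (simp add: coeff_map_poly)

lemma mpi_diff: "map_poly (of_int :: int \<Rightarrow> 'a::comm_ring_1) (A - B) = map_poly of_int A - map_poly of_int B"
  by (rule poly_eqI) (simp add: coeff_map_poly)

lemma mpi_uminus: "map_poly (of_int :: int \<Rightarrow> 'a::comm_ring_1) (- A) = - map_poly of_int A"
  by (rule poly_eqI) (simp add: coeff_map_poly)

lemma mpi_mult: "map_poly (of_int :: int \<Rightarrow> 'a::comm_ring_1) (A * B) = map_poly of_int A * map_poly of_int B"
  by (rule poly_eqI) (simp add: coeff_map_poly coeff_mult)

lemma mpi_smult: "map_poly (of_int :: int \<Rightarrow> 'a::comm_ring_1) (smult c A) = smult (of_int c) (map_poly of_int A)"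
  by (rule poly_eqI) (simp add: coeff_map_poly)

lemma mpi_pCons: "map_poly (of_int :: int \<Rightarrow> 'a::comm_ring_1) (pCons a A) = pCons (of_int a) (map_poly of_int A)"
  by (rule poly_eqI) (simp add: coeff_map_poly coeff_pCons split: nat.split)

lemma mpi_power: "map_poly (of_int :: int \<Rightarrow> 'a::comm_ring_1) (A ^ k) = (map_poly of_int A) ^ k"
  by (induction k) (simp_all add: mpi_mult)

lemma mpi_sum: "map_poly (of_int :: int \<Rightarrow> 'a::comm_ring_1) (\<Sum>i\<in>I. f i) = (\<Sum>i\<in>I. map_poly of_int (f i))"
  by (induction I rule: infinite_finite_induct) (simp_all add: mpi_add)

lemma mpi_const: "map_poly (of_int :: int \<Rightarrow> 'a::comm_ring_1) [:a:] = [:of_int a:]"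
  by (simp add: mpi_pCons)

lemma mpi_eq_0: "map_poly (of_int :: int \<Rightarrow> 'a::{comm_ring_1,ring_char_0}) A = 0 \<longleftrightarrow> A = 0"
  by (rule map_poly_eq_0_iff) auto

lemma degree_mpi: "degree (map_poly (of_int :: int \<Rightarrow> 'a::{comm_ring_1,ring_char_0}) A) = degree A"
  by (rule degree_map_poly) auto

lemma coeff_mpi: "coeff (map_poly (of_int :: int \<Rightarrow> 'a::comm_ring_1) A) k = of_int (coeff A k)"
  by (simp add: coeff_map_poly)

section \<open>Minimal polynomial uniqueness\<close>

lemma min_deg:
  fixes P R :: "int poly" and \<alpha> :: complex
  assumes irr: "irreducible P" and rP: "poly (map_poly of_int P) \<alpha> = 0"
    and R0: "R \<noteq> 0" and rR: "poly (map_poly of_int R) \<alpha> = 0"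
  shows "degree P \<le> degree R"
proof -
  define Pr where "Pr = (\<lambda>d. \<exists>M::int poly. M \<noteq> 0 \<and> poly (map_poly of_int M) \<alpha> = 0 \<and> degree M = d)"
  have "Pr (degree R)" using R0 rR Pr_def by blast
  define d where "d = (LEAST d. Pr d)"
  have "Pr d" unfolding d_def by (rule LeastI) fact
  then obtain M where M: "M \<noteq> 0" "poly (map_poly of_int M) \<alpha> = 0" "degree M = d"
    unfolding Pr_def by blast
  have dle: "d \<le> degree R" unfolding d_def by (rule Least_le) fact
  have minM: "\<And>T. T \<noteq> 0 \<Longrightarrow> poly (map_poly of_int T) \<alpha> = 0 \<Longrightarrow> degree M \<le> degree T"
  proof -
    fix T :: "int poly" assume "T \<noteq> 0" "poly (map_poly of_int T) \<alpha> = 0"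
    then have "Pr (degree T)" unfolding Pr_def by blast
    then show "degree M \<le> degree T" unfolding M(3) d_def by (rule Least_le)
  qed
  obtain s t where st: "pseudo_divmod P M = (s, t)" by (metis surj_pair)
  define c where "c = coeff M (degree M) ^ (Suc (degree P) - degree M)"
  have eq: "smult c P = M * s + t" and tdeg: "t = 0 \<or> degree t < degree M"
    using pseudo_divmod[OF M(1) st] unfolding c_def by auto
  have c0: "c \<noteq> 0" unfolding c_def using M(1) by simp
  have "poly (map_poly of_int (smult c P)) \<alpha> = poly (map_poly of_int (M * s + t)) \<alpha>"
    using eq by simp
  then have "poly (map_poly of_int t) \<alpha> = 0"
    using rP M(2) by (simp add: mpi_smult mpi_add mpi_mult)
  then have t0: "t = 0" using tdeg minM by fastforce
  have pr: "prime_elem P" by (rule irreducible_imp_prime_poly[OF irr])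
  have "[:c:] * P = M * s" using eq t0 by simp
  then have "P dvd M * s" by (metis dvd_triv_right)
  then have "P dvd M \<or> P dvd s" using pr prime_elem_dvd_mult_iff by blast
  then show ?thesis
  proof
    assume "P dvd M"
    then have "degree P \<le> degree M" using M(1) by (rule dvd_imp_degree_le)
    then show ?thesis using dle M(3) by simp
  next
    assume "P dvd s"
    then obtain w where w: "s = P * w" by (rule dvdE)
    have P0: "P \<noteq> 0" using irr by auto
    have "[:c:] * P = (M * w) * P" using eq t0 w by (simp add: mult_ac)
    then have "[:c:] = M * w" using P0 by (metis mult_right_cancel)
    then have "degree M = 0"
      by (metis c0 degree_mult_eq degree_pCons_0 mult_eq_0_iff add_is_0 pCons_eq_0_iff)
    then obtain m where "M = [:m:]" by (meson degree_eq_zeroE)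
    then show ?thesis using M(1,2) by (simp add: mpi_const)
  qed
qed

lemma min_int_poly_eq:
  fixes P :: "int poly" and \<alpha> :: complex
  assumes irr: "irreducible P" and lc: "lead_coeff P > 0" and rP: "poly (map_poly of_int P) \<alpha> = 0"
  shows "min_int_poly \<alpha> = P"
proof -
  define Q where "Q = min_int_poly \<alpha>"
  have "\<exists>P. irreducible P \<and> lead_coeff P > 0 \<and> poly (map_poly of_int P) \<alpha> = 0"
    using assms by blast
  then have Q: "irreducible Q" "lead_coeff Q > 0" "poly (map_poly of_int Q) \<alpha> = 0"
    unfolding Q_def min_int_poly_def by (metis (mono_tags, lifting) someI_ex)+
  have P0: "P \<noteq> 0" and Q0: "Q \<noteq> 0" using irr Q(1) by auto
  have d1: "degree Q \<le> degree P" using min_deg[OF Q(1) Q(3) P0 rP] .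
  obtain s t where st: "pseudo_divmod Q P = (s, t)" by (metis surj_pair)
  define c where "c = coeff P (degree P) ^ (Suc (degree Q) - degree P)"
  have eq: "smult c Q = P * s + t" and tdeg: "t = 0 \<or> degree t < degree P"
    using pseudo_divmod[OF P0 st] unfolding c_def by auto
  have c0: "c \<noteq> 0" unfolding c_def using P0 by simp
  have "poly (map_poly of_int (smult c Q)) \<alpha> = poly (map_poly of_int (P * s + t)) \<alpha>"
    using eq by simp
  then have "poly (map_poly of_int t) \<alpha> = 0"
    using rP Q(3) by (simp add: mpi_smult mpi_add mpi_mult)
  then have t0: "t = 0" using tdeg min_deg[OF irr rP] by fastforce
  have s0: "s \<noteq> 0" using eq t0 c0 Q0 by auto
  have "degree (smult c Q) = degree P + degree s" using eq t0 P0 s0 by (simp add: degree_mult_eq)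
  then have "degree s = 0" using d1 c0 by simp
  then obtain s0' where s': "s = [:s0':]" by (meson degree_eq_zeroE)
  have eq2: "smult c Q = smult s0' P" using eq t0 s' by simp
  have "degree P \<noteq> 0"
  proof
    assume "degree P = 0"
    then obtain a where "P = [:a:]" by (meson degree_eq_zeroE)
    then show False using rP P0 by (simp add: mpi_const)
  qed
  then have cP: "content P = 1" using irr nonconst_poly_irreducible_iff by blast
  have "degree Q \<noteq> 0"
  proof
    assume "degree Q = 0"
    then obtain a where "Q = [:a:]" by (meson degree_eq_zeroE)
    then show False using Q(3) Q0 by (simp add: mpi_const)
  qed
  then have cQ: "content Q = 1" using Q(1) nonconst_poly_irreducible_iff by blast
  have "content (smult c Q) = content (smult s0' P)" using eq2 by simp
  then have "\<bar>c\<bar> = \<bar>s0'\<bar>" using cP cQ by simp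
  moreover have "s0' \<noteq> 0" using s0 s' by simp
  moreover have "c * lead_coeff Q = s0' * lead_coeff P"
    using arg_cong[OF eq2, of lead_coeff] c0 \<open>s0' \<noteq> 0\<close> by simp
  ultimately have "c = s0'" using Q(2) lc c0
    by (smt (verit, ccfv_threshold) mult_pos_pos zero_less_mult_iff)
  then have "smult c Q = smult c P" using eq2 by simp
  then show ?thesis using c0 Q_def by (metis smult_cancel)
qed

section \<open>Eisenstein at 2\<close>

lemma eis_aux:
  fixes A B :: "int poly"
  assumes PAB: "P = A * B" and eA: "even (coeff A 0)" and oB: "odd (coeff B 0)"
    and oA: "odd (lead_coeff A)" and dA: "degree A \<ge> 1" and dB: "degree B \<ge> 1"
    and ev: "\<forall>k. 0 < k \<and> k < degree P \<longrightarrow> even (coeff P k)"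
  shows False
proof -
  have A0: "A \<noteq> 0" and B0: "B \<noteq> 0" using dA dB by auto
  define i where "i = (LEAST i. odd (coeff A i))"
  have oi: "odd (coeff A i)" unfolding i_def by (rule LeastI) (use oA in blast)
  have ile: "i \<le> degree A" unfolding i_def by (rule Least_le) (use oA in blast)
  have below: "\<And>j. j < i \<Longrightarrow> even (coeff A j)" unfolding i_def using not_less_Least by blast
  have i1: "i \<ge> 1" using oi eA by (cases i) auto
  have dP: "degree P = degree A + degree B" using PAB A0 B0 by (simp add: degree_mult_eq)
  have "coeff P i = (\<Sum>j\<le>i. coeff A j * coeff B (i - j))" using PAB by (simp add: coeff_mult)
  also have "\<dots> = (\<Sum>j<i. coeff A j * coeff B (i - j)) + coeff A i * coeff B 0"
    by (simp add: lessThan_Suc_atMost[symmetric])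
  finally have cPi: "coeff P i = (\<Sum>j<i. coeff A j * coeff B (i - j)) + coeff A i * coeff B 0" .
  have "even (\<Sum>j<i. coeff A j * coeff B (i - j))"
    by (rule dvd_sum) (use below in auto)
  then have "odd (coeff P i)" using cPi oi oB by simp
  moreover have "even (coeff P i)" using ev i1 ile dP dB by auto
  ultimately show False by simp
qed

lemma eisenstein_split:
  fixes P A B :: "int poly"
  assumes PAB: "P = A * B" and oP: "odd (lead_coeff P)"
    and ev: "\<forall>k. 0 < k \<and> k < degree P \<longrightarrow> even (coeff P k)"
    and c0: "coeff P 0 mod 4 = 2"
  shows "degree A = 0 \<or> degree B = 0"
proof (rule ccontr)
  assume "\<not> (degree A = 0 \<or> degree B = 0)"
  then have dA: "degree A \<ge> 1" and dB: "degree B \<ge> 1" by auto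
  have lc: "lead_coeff P = lead_coeff A * lead_coeff B" using PAB by (simp add: lead_coeff_mult)
  then have oA: "odd (lead_coeff A)" and oB': "odd (lead_coeff B)" using oP by auto
  have p0: "coeff P 0 = coeff A 0 * coeff B 0" using PAB by (simp add: coeff_mult)
  have "even (coeff P 0)" using c0 by presburger
  have n4: "\<not> 4 dvd coeff P 0" using c0 by presburger
  have "even (coeff A 0) \<noteq> even (coeff B 0)"
  proof
    assume h: "even (coeff A 0) = even (coeff B 0)"
    show False
    proof (cases "even (coeff A 0)")
      case True
      then have "even (coeff B 0)" using h by simp
      then have "4 dvd coeff A 0 * coeff B 0" using True
        by (metis mult_dvd_mono numeral_Bit0_eq_double mult_2 numeral_times_numeral semiring_norm(12) num_double)
      then show False using n4 p0 by simp
    next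
      case False
      then have "odd (coeff B 0)" using h by simp
      then show False using False \<open>even (coeff P 0)\<close> p0 by simp
    qed
  qed
  then show False
  proof (cases "even (coeff A 0)")
    case True
    then have "odd (coeff B 0)" using \<open>even (coeff A 0) \<noteq> even (coeff B 0)\<close> by simp
    then show False using eis_aux[OF PAB True _ oA dA dB ev] by simp
  next
    case False
    then have eB: "even (coeff B 0)" using \<open>even (coeff A 0) \<noteq> even (coeff B 0)\<close> by simp
    have PBA: "P = B * A" using PAB by (simp add: mult.commute)
    show False using eis_aux[OF PBA eB False oB' dB dA ev] by simp
  qed
qed

lemma eisenstein_irreducible:
  fixes P :: "int poly"
  assumes cP: "content P = 1" and dP: "degree P \<ge> 1" and oP: "odd (lead_coeff P)"
    and ev: "\<forall>k. 0 < k \<and> k < degree P \<longrightarrow> even (coeff P k)"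
    and c0: "coeff P 0 mod 4 = 2"
  shows "irreducible P"
proof (rule irreducibleI)
  show "P \<noteq> 0" using dP by auto
  show "\<not> P dvd 1" using dP by (auto simp: is_unit_poly_iff)
  fix A B assume PAB: "P = A * B"
  have "degree A = 0 \<or> degree B = 0" using eisenstein_split[OF PAB oP ev c0] .
  then show "A dvd 1 \<or> B dvd 1"
  proof
    assume "degree A = 0"
    then obtain a where a: "A = [:a:]" by (meson degree_eq_zeroE)
    then have "P = smult a B" using PAB by simp
    then have "normalize a * content B = 1" using cP by simp
    then have "a dvd 1" by (metis dvd_triv_left normalize_dvd_iff)
    then show ?thesis using a by (simp add: is_unit_const_poly_iff)
  next
    assume "degree B = 0"
    then obtain b where b: "B = [:b:]" by (meson degree_eq_zeroE)
    then have "P = smult b A" using PAB by simp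
    then have "normalize b * content A = 1" using cP by simp
    then have "b dvd 1" by (metis dvd_triv_left normalize_dvd_iff)
    then show ?thesis using b by (simp add: is_unit_const_poly_iff)
  qed
qed




section \<open>l1 norm of complex polynomials\<close>

definition l1 :: "complex poly \<Rightarrow> real" where
  "l1 R = (\<Sum>k\<le>degree R. cmod (coeff R k))"

lemma l1_ext: "degree R \<le> N \<Longrightarrow> l1 R = (\<Sum>k\<le>N. cmod (coeff R k))"
  unfolding l1_def
  by (rule sum.mono_neutral_left) (auto simp: coeff_eq_0)

lemma l1_nonneg: "l1 R \<ge> 0"
  unfolding l1_def by (simp add: sum_nonneg)

lemma coeff_le_l1: "cmod (coeff R k) \<le> l1 R"
proof (cases "k \<le> degree R")
  case True
  then show ?thesis unfolding l1_def
    by (intro member_le_sum) auto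
next
  case False
  then show ?thesis using l1_nonneg by (simp add: coeff_eq_0)
qed

lemma l1_0 [simp]: "l1 0 = 0" by (simp add: l1_def)

lemma l1_1 [simp]: "l1 1 = 1" by (simp add: l1_def)

lemma l1_add: "l1 (A + B) \<le> l1 A + l1 B"
proof -
  define N where "N = max (degree A) (degree B)"
  have "l1 (A + B) = (\<Sum>k\<le>N. cmod (coeff (A + B) k))"
    by (rule l1_ext) (simp add: N_def degree_add_le)
  also have "\<dots> \<le> (\<Sum>k\<le>N. cmod (coeff A k) + cmod (coeff B k))"
    by (rule sum_mono) (simp add: norm_triangle_ineq)
  also have "\<dots> = l1 A + l1 B"
  proof -
    have "l1 A = (\<Sum>k\<le>N. cmod (coeff A k))" by (rule l1_ext) (simp add: N_def)
    moreover have "l1 B = (\<Sum>k\<le>N. cmod (coeff B k))" by (rule l1_ext) (simp add: N_def)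
    ultimately show ?thesis by (simp add: sum.distrib)
  qed
  finally show ?thesis .
qed

lemma l1_smult: "l1 (smult c A) = cmod c * l1 A"
proof -
  have "l1 (smult c A) = (\<Sum>k\<le>degree A. cmod (coeff (smult c A) k))"
    by (rule l1_ext) (simp add: degree_smult_le)
  also have "\<dots> = cmod c * l1 A" by (simp add: l1_def sum_distrib_left norm_mult)
  finally show ?thesis .
qed

lemma l1_uminus: "l1 (- A) = l1 A"
  using l1_smult[of "-1" A] by simp

lemma l1_diff: "l1 (A - B) \<le> l1 A + l1 B"
  using l1_add[of A "-B"] by (simp add: l1_uminus)

lemma l1_pCons: "l1 (pCons a A) = cmod a + l1 A"
proof -
  have "l1 (pCons a A) = (\<Sum>k\<le>Suc (degree A). cmod (coeff (pCons a A) k))"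
    by (rule l1_ext) (simp add: degree_pCons_le)
  also have "\<dots> = cmod a + (\<Sum>k\<le>degree A. cmod (coeff A k))"
    by (subst sum.atMost_Suc_shift) simp
  finally show ?thesis by (simp add: l1_def)
qed

lemma l1_mult: "l1 (A * B) \<le> l1 A * l1 B"
proof (induction A rule: pCons_induct)
  case 0
  then show ?case by simp
next
  case (pCons a A)
  have "l1 (pCons a A * B) = l1 (smult a B + pCons 0 (A * B))" by simp
  also have "\<dots> \<le> l1 (smult a B) + l1 (pCons 0 (A * B))" by (rule l1_add)
  also have "\<dots> = cmod a * l1 B + l1 (A * B)" by (simp add: l1_smult l1_pCons)
  also have "\<dots> \<le> cmod a * l1 B + l1 A * l1 B" using pCons.IH by simp
  also have "\<dots> = l1 (pCons a A) * l1 B" by (simp add: l1_pCons algebra_simps)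
  finally show ?case .
qed

lemma l1_power: "l1 (A ^ k) \<le> l1 A ^ k"
proof (induction k)
  case 0
  then show ?case by simp
next
  case (Suc k)
  have "l1 (A ^ Suc k) \<le> l1 A * l1 (A ^ k)" by (simp add: l1_mult)
  also have "\<dots> \<le> l1 A * l1 A ^ k" by (rule mult_left_mono[OF Suc.IH l1_nonneg])
  finally show ?case by simp
qed

lemma l1_sum: "l1 (\<Sum>i\<in>I. f i) \<le> (\<Sum>i\<in>I. l1 (f i))"
proof (induction I rule: infinite_finite_induct)
  case (insert x F)
  then show ?case using l1_add[of "f x" "sum f F"] by simp
qed simp_all

lemma l1_lin: "l1 [:a, b:] = cmod a + cmod b"
  by (simp add: l1_pCons)

lemma poly_le_l1: "cmod (poly R z) \<le> l1 R * max 1 (cmod z) ^ degree R"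
proof -
  have "cmod (poly R z) = cmod (\<Sum>k\<le>degree R. coeff R k * z ^ k)" by (simp add: poly_altdef)
  also have "\<dots> \<le> (\<Sum>k\<le>degree R. cmod (coeff R k) * cmod z ^ k)"
    by (rule order.trans[OF norm_sum]) (simp add: norm_mult norm_power)
  also have "\<dots> \<le> (\<Sum>k\<le>degree R. cmod (coeff R k) * max 1 (cmod z) ^ degree R)"
  proof (rule sum_mono)
    fix k assume "k \<in> {..degree R}"
    then have "cmod z ^ k \<le> max 1 (cmod z) ^ degree R"
      by (meson atMost_iff le_max_iff_disj max.cobounded2 norm_ge_zero order.trans power_increasing power_mono zero_le_one max.cobounded1)
    then show "cmod (coeff R k) * cmod z ^ k \<le> cmod (coeff R k) * max 1 (cmod z) ^ degree R"
      by (simp add: mult_left_mono)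
  qed
  also have "\<dots> = l1 R * max 1 (cmod z) ^ degree R" by (simp add: l1_def sum_distrib_right)
  finally show ?thesis .
qed

lemma height_ge: "\<bar>coeff P k\<bar> \<le> poly_height P"
proof (cases "k \<le> degree P")
  case True
  then show ?thesis unfolding poly_height_def by (intro Max_ge) auto
next
  case False
  have "\<bar>coeff P 0\<bar> \<le> poly_height P" unfolding poly_height_def by (intro Max_ge) auto
  then show ?thesis using False by (simp add: coeff_eq_0)
qed

lemma height_le: "(\<And>k. \<bar>coeff P k\<bar> \<le> B) \<Longrightarrow> poly_height P \<le> B"
  unfolding poly_height_def by (subst Max_le_iff) auto

lemma smult_sum_right: "smult a (\<Sum>i\<in>S. f i) = (\<Sum>i\<in>S. smult a (f i))"
  by (induct S rule: infinite_finite_induct) (auto simp: smult_add_right)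

section \<open>Spans of products of two linear forms\<close>

definition inS :: "nat \<Rightarrow> complex poly \<Rightarrow> complex poly \<Rightarrow> complex poly \<Rightarrow> bool" where
  "inS n X Y V \<longleftrightarrow> (\<exists>\<mu>::nat \<Rightarrow> real. V = (\<Sum>i\<le>n. smult (of_real (\<mu> i)) (X ^ i * Y ^ (n - i))))"

lemma inS_add: "inS n X Y V \<Longrightarrow> inS n X Y W \<Longrightarrow> inS n X Y (V + W)"
proof -
  assume "inS n X Y V" "inS n X Y W"
  then obtain \<mu> \<nu> where "V = (\<Sum>i\<le>n. smult (of_real (\<mu> i)) (X ^ i * Y ^ (n - i)))"
    "W = (\<Sum>i\<le>n. smult (of_real (\<nu> i)) (X ^ i * Y ^ (n - i)))" unfolding inS_def by blast
  then have "V + W = (\<Sum>i\<le>n. smult (of_real (\<mu> i + \<nu> i)) (X ^ i * Y ^ (n - i)))"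
    by (simp add: sum.distrib smult_add_left)
  then show ?thesis unfolding inS_def by (intro exI[where x="\<lambda>i. \<mu> i + \<nu> i"])
qed

lemma inS_smult: "inS n X Y V \<Longrightarrow> inS n X Y (smult (of_real a) V)"
proof -
  assume "inS n X Y V"
  then obtain \<mu> where "V = (\<Sum>i\<le>n. smult (of_real (\<mu> i)) (X ^ i * Y ^ (n - i)))"
    unfolding inS_def by blast
  then have "smult (of_real a) V = (\<Sum>i\<le>n. smult (of_real (a * \<mu> i)) (X ^ i * Y ^ (n - i)))"
    by (simp add: smult_sum_right smult_smult)
  then show ?thesis unfolding inS_def by (intro exI[where x="\<lambda>i. a * \<mu> i"])
qed

lemma inS_mulX: "inS n X Y V \<Longrightarrow> inS (Suc n) X Y (X * V)"
proof -
  assume "inS n X Y V"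
  then obtain \<mu> where V: "V = (\<Sum>i\<le>n. smult (of_real (\<mu> i)) (X ^ i * Y ^ (n - i)))"
    unfolding inS_def by blast
  define \<nu> where "\<nu> = (\<lambda>j. if j = 0 then 0 else \<mu> (j - 1))"
  have "(\<Sum>j\<le>Suc n. smult (of_real (\<nu> j)) (X ^ j * Y ^ (Suc n - j)))
      = (\<Sum>i\<le>n. smult (of_real (\<mu> i)) (X ^ Suc i * Y ^ (n - i)))"
    by (subst sum.atMost_Suc_shift) (simp add: \<nu>_def)
  also have "\<dots> = X * V" by (simp add: V sum_distrib_left mult_ac)
  finally show ?thesis unfolding inS_def by metis
qed

lemma inS_mulY: "inS n X Y V \<Longrightarrow> inS (Suc n) X Y (Y * V)"
proof -
  assume "inS n X Y V"
  then obtain \<mu> where V: "V = (\<Sum>i\<le>n. smult (of_real (\<mu> i)) (X ^ i * Y ^ (n - i)))"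
    unfolding inS_def by blast
  define \<nu> where "\<nu> = (\<lambda>j. if j \<le> n then \<mu> j else 0)"
  have "(\<Sum>j\<le>Suc n. smult (of_real (\<nu> j)) (X ^ j * Y ^ (Suc n - j)))
      = (\<Sum>i\<le>n. smult (of_real (\<mu> i)) (X ^ i * Y ^ (Suc n - i)))"
    by (simp add: \<nu>_def)
  also have "\<dots> = (\<Sum>i\<le>n. smult (of_real (\<mu> i)) (X ^ i * (Y * Y ^ (n - i))))"
    by (intro sum.cong refl) (simp add: Suc_diff_le)
  also have "\<dots> = Y * V" by (simp add: V sum_distrib_left mult_ac)
  finally show ?thesis unfolding inS_def by metis
qed

lemma inS_lin:
  assumes "inS n X Y V"
  shows "inS (Suc n) X Y ((smult (of_real a) X + smult (of_real b) Y) * V)"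
proof -
  have "(smult (of_real a) X + smult (of_real b) Y) * V = smult (of_real a) (X * V) + smult (of_real b) (Y * V)"
    by (simp add: algebra_simps)
  then show ?thesis using inS_add inS_smult inS_mulX[OF assms] inS_mulY[OF assms] by metis
qed

lemma inS_all:
  assumes T: "[:0, 1:] = smult (of_real a) X + smult (of_real b) Y"
    and O: "1 = smult (of_real c) X + smult (of_real d) Y"
  shows "degree V \<le> n \<Longrightarrow> (\<forall>k. coeff V k \<in> \<real>) \<Longrightarrow> inS n X Y V"
proof (induction n arbitrary: V)
  case 0
  then have V: "V = [:coeff V 0:]" by (metis degree_0_id le_zero_eq)
  from 0 obtain r where r: "coeff V 0 = of_real r" by (meson Reals_cases)
  have "V = (\<Sum>i\<le>0. smult (of_real ((\<lambda>_. r) i)) (X ^ i * Y ^ (0 - i)))"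
    using V r by simp
  then show ?case unfolding inS_def by (intro exI[where x="\<lambda>_. r"])
next
  case (Suc n)
  obtain a0 V' where V: "V = pCons a0 V'" by (meson pCons_cases)
  have dV': "degree V' \<le> n" using Suc.prems(1) V by (cases "V' = 0") auto
  have rV': "\<forall>k. coeff V' k \<in> \<real>" using Suc.prems(2) V by (metis coeff_pCons_Suc)
  have "a0 \<in> \<real>" using Suc.prems(2) V by (metis coeff_pCons_0)
  then obtain r where r: "a0 = of_real r" by (meson Reals_cases)
  have I1: "inS n X Y 1" by (rule Suc.IH) auto
  have I1': "inS (Suc n) X Y 1" using inS_lin[OF I1, of c d] O by simp
  have IV: "inS (Suc n) X Y ([:0,1:] * V')" using inS_lin[OF Suc.IH[OF dV' rV'], of a b] T by simp
  have "V = smult (of_real r) 1 + [:0,1:] * V'" using V r by simp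
  then show ?case using inS_add inS_smult I1' IV by metis
qed




lemma lattice2:
  assumes "badly_approximable \<xi>"
  obtains C :: real where "C \<ge> 1" and
    "\<And>Q0. Q0 \<ge> 1 \<Longrightarrow> \<exists>(p::int) (q::int) (p'::int) (q'::int). p * q' - p' * q = 1 \<and> q > 0 \<and>
        \<bar>real_of_int q\<bar> \<le> C * Q0 \<and> \<bar>real_of_int q'\<bar> \<le> C * Q0 \<and> \<bar>of_int q * \<xi> - of_int p\<bar> \<le> C / Q0 \<and> \<bar>of_int q' * \<xi> - of_int p'\<bar> \<le> C / Q0"
proof -
  from assms obtain c :: real where c: "c > 0"
    and bad: "\<And>p q::int. q \<ge> 1 \<Longrightarrow> \<bar>\<xi> - real_of_int p / real_of_int q\<bar> \<ge> c / (real_of_int q)^2"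
    unfolding badly_approximable_def by blast
  define C where "C = max 2 (1 + 1/c)"
  have C1: "C \<ge> 1" unfolding C_def by simp
  have main: "\<exists>(p::int) (q::int) (p'::int) (q'::int). p * q' - p' * q = 1 \<and> q > 0 \<and>
        \<bar>real_of_int q\<bar> \<le> C * Q0 \<and> \<bar>real_of_int q'\<bar> \<le> C * Q0 \<and> \<bar>of_int q * \<xi> - of_int p\<bar> \<le> C / Q0 \<and> \<bar>of_int q' * \<xi> - of_int p'\<bar> \<le> C / Q0"
    if Q0: "Q0 \<ge> 1" for Q0
  proof -
    define N where "N = nat \<lceil>Q0\<rceil>"
    have N0: "N > 0" using Q0 N_def by simp
    have NQ: "Q0 \<le> real N" using Q0 N_def by linarith
    have NQ2: "real N \<le> 2 * Q0" using Q0 N_def by linarith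
    obtain h k where hk: "coprime h k" "0 < k" "k \<le> int N" "\<bar>of_int k * \<xi> - of_int h\<bar> < 1 / N"
      using Dirichlet_approx_coprime[OF N0] by blast
    have k1: "k \<ge> 1" using hk by simp
    have "c / (real_of_int k)^2 \<le> \<bar>\<xi> - real_of_int h / real_of_int k\<bar>" using bad[OF k1] .
    also have "\<dots> = \<bar>of_int k * \<xi> - of_int h\<bar> / of_int k" using hk(2)
      by (simp add: field_simps abs_div abs_mult)
    finally have "c / real_of_int k \<le> \<bar>of_int k * \<xi> - of_int h\<bar>" using hk(2)
      by (simp add: field_simps power2_eq_square)
    then have "c / real_of_int k < 1 / N" using hk(4) by simp
    then have kbig: "1 / real_of_int k < 1 / (c * N)" using c hk(2) N0
      by (simp add: field_simps)
    obtain u v where uv: "u * h + v * k = 1"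
      using hk(1) by (metis bezout_int coprime_iff_gcd_eq_1)
    define t where "t = u div k"
    define q' where "q' = u - t * k"
    define p' where "p' = - v - t * h"
    have q'mod: "q' = u mod k" unfolding q'_def t_def by (simp add: minus_div_mult_eq_mod)
    have q'0: "0 \<le> q'" "q' < k" using hk(2) q'mod by auto
    have det: "h * q' - p' * k = 1" unfolding q'_def p'_def using uv by (simp add: algebra_simps)
    have ident: "(of_int q' * \<xi> - of_int p') * of_int k = (of_int k * \<xi> - of_int h) * of_int q' + 1"
    proof -
      have "real_of_int (h * q' - p' * k) = 1" using det by simp
      then show ?thesis by (simp add: algebra_simps)
    qed
    define l where "l = of_int k * \<xi> - of_int h"
    define l' where "l' = of_int q' * \<xi> - of_int p'"
    have kpos: "real_of_int k > 0" using hk(2) by simp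
    have "\<bar>l'\<bar> * of_int k = \<bar>l * of_int q' + 1\<bar>"
      using ident kpos unfolding l_def l'_def by (metis abs_mult abs_of_pos)
    also have "\<dots> \<le> \<bar>l\<bar> * of_int q' + 1"
      using q'0 by (simp add: abs_mult abs_triangle_ineq[THEN order.trans])
    also have "\<dots> \<le> \<bar>l\<bar> * of_int k + 1"
      using q'0 by (intro add_right_mono mult_left_mono) auto
    finally have "\<bar>l'\<bar> * of_int k \<le> \<bar>l\<bar> * of_int k + 1" .
    then have "\<bar>l'\<bar> \<le> \<bar>l\<bar> + 1 / of_int k"
      using kpos by (simp add: field_simps)
    then have "\<bar>of_int q' * \<xi> - of_int p'\<bar> \<le> \<bar>of_int k * \<xi> - of_int h\<bar> + 1 / of_int k"
      unfolding l_def l'_def .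
    also have "\<dots> \<le> 1 / N + 1 / (c * N)" using hk(4) kbig by simp
    also have "\<dots> = (1 + 1 / c) / N" using c N0 by (simp add: field_simps)
    also have "\<dots> \<le> C / Q0" unfolding C_def using Q0 NQ c
      by (intro frac_le) (auto simp: max_def)
    finally have b1: "\<bar>of_int q' * \<xi> - of_int p'\<bar> \<le> C / Q0" .
    have b2: "\<bar>of_int k * \<xi> - of_int h\<bar> \<le> C / Q0"
    proof -
      have "\<bar>of_int k * \<xi> - of_int h\<bar> \<le> 1 / N" using hk(4) by simp
      also have "\<dots> \<le> C / Q0" using C1 NQ Q0 by (intro frac_le) auto
      finally show ?thesis .
    qed
    have b3: "\<bar>real_of_int k\<bar> \<le> C * Q0"
    proof -
      have "\<bar>real_of_int k\<bar> \<le> real N" using hk(2,3) by simp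
      also have "\<dots> \<le> 2 * Q0" by (rule NQ2)
      also have "\<dots> \<le> C * Q0" unfolding C_def using Q0 by (intro mult_right_mono) auto
      finally show ?thesis .
    qed
    have b4: "\<bar>real_of_int q'\<bar> \<le> C * Q0" using q'0 b3 by simp
    show ?thesis using det hk(2) b1 b2 b3 b4 by (intro exI[of _ h] exI[of _ k] exI[of _ p'] exI[of _ q']) simp
  qed
  show ?thesis using that[OF C1 main] by blast
qed




definition XXc :: "int \<Rightarrow> int \<Rightarrow> complex poly" where
  "XXc a b = [:- of_int a, of_int b:]"
definition XI :: "int \<Rightarrow> int \<Rightarrow> int poly" where
  "XI a b = [:- a, b:]"

lemma mpi_XI: "map_poly of_int (XI a b) = XXc a b"
  by (simp add: XI_def XXc_def mpi_pCons)

lemma poly_XXc: "poly (XXc a b) z = of_int b * z - of_int a"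
  by (simp add: XXc_def)

lemma degree_XI: "degree (XI a b) \<le> 1"
  by (simp add: XI_def)

definition Esum :: "nat \<Rightarrow> (nat \<Rightarrow> real) \<Rightarrow> complex poly \<Rightarrow> complex poly \<Rightarrow> complex poly" where
  "Esum n f X Y = (\<Sum>i\<le>n. smult (of_real (f i)) (X ^ i * Y ^ (n - i)))"

lemma round_S:
  assumes "inS n (XXc a b) (XXc c d) W"
  shows "\<exists>R f. degree R \<le> n \<and> (\<forall>i. \<bar>f i\<bar> \<le> 1/2) \<and>
     map_poly of_int R = W - Esum n f (XXc a b) (XXc c d)"
proof -
  obtain \<mu> where W: "W = (\<Sum>i\<le>n. smult (of_real (\<mu> i)) (XXc a b ^ i * XXc c d ^ (n - i)))"
    using assms unfolding inS_def by blast
  define R where "R = (\<Sum>i\<le>n. smult (round (\<mu> i)) (XI a b ^ i * XI c d ^ (n - i)))"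
  define f where "f = (\<lambda>i. \<mu> i - of_int (round (\<mu> i)))"
  have "map_poly of_int R = (\<Sum>i\<le>n. smult (of_int (round (\<mu> i))) (XXc a b ^ i * XXc c d ^ (n - i)))"
    unfolding R_def by (simp add: mpi_sum mpi_smult mpi_mult mpi_power mpi_XI)
  also have "\<dots> = W - Esum n f (XXc a b) (XXc c d)"
    unfolding W Esum_def f_def
    by (simp add: sum_subtractf[symmetric] smult_diff_left[symmetric])
  finally have eq: "map_poly of_int R = W - Esum n f (XXc a b) (XXc c d)" .
  have fb: "\<forall>i. \<bar>f i\<bar> \<le> 1/2" unfolding f_def using of_int_round_abs_le
    by (metis abs_minus_commute)
  have "degree R \<le> n" unfolding R_def
  proof (intro degree_sum_le)
    fix i assume "i \<in> {..n}"
    have "degree (smult (round (\<mu> i)) (XI a b ^ i * XI c d ^ (n - i)))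
        \<le> degree (XI a b ^ i) + degree (XI c d ^ (n - i))"
      by (rule order.trans[OF degree_smult_le degree_mult_le])
    also have "\<dots> \<le> 1 * i + 1 * (n - i)"
      by (intro add_mono order.trans[OF degree_power_le] mult_right_mono degree_XI) auto
    also have "\<dots> = n" using \<open>i \<in> {..n}\<close> by simp
    finally show "degree (smult (round (\<mu> i)) (XI a b ^ i * XI c d ^ (n - i))) \<le> n" .
  qed auto
  then show ?thesis using eq fb by blast
qed

lemma Esum_poly_bound:
  assumes f: "\<forall>i. \<bar>f i\<bar> \<le> 1/2" and B: "cmod (poly X z) \<le> B" "cmod (poly Y z) \<le> B"
  shows "cmod (poly (Esum n f X Y) z) \<le> (real n + 1) / 2 * B ^ n"
proof -
  have B0: "B \<ge> 0" using B(1) norm_ge_zero order.trans by blast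
  have "cmod (poly (Esum n f X Y) z) \<le> (\<Sum>i\<le>n. cmod (of_real (f i) * poly X z ^ i * poly Y z ^ (n - i)))"
    unfolding Esum_def by (simp add: poly_sum mult.assoc norm_sum)
  also have "\<dots> \<le> (\<Sum>i\<le>n. 1/2 * B ^ n)"
  proof (rule sum_mono)
    fix i assume i: "i \<in> {..n}"
    have "cmod (of_real (f i) * poly X z ^ i * poly Y z ^ (n - i)) = \<bar>f i\<bar> * cmod (poly X z) ^ i * cmod (poly Y z) ^ (n - i)"
      by (simp add: norm_mult norm_power)
    also have "\<dots> \<le> 1/2 * B ^ i * B ^ (n - i)"
      using f B by (intro mult_mono power_mono) (auto simp: B0)
    also have "\<dots> = 1/2 * B ^ n" using i by (simp add: power_add[symmetric])
    finally show "cmod (of_real (f i) * poly X z ^ i * poly Y z ^ (n - i)) \<le> 1/2 * B ^ n" .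
  qed
  also have "\<dots> = (real n + 1) / 2 * B ^ n" by simp
  finally show ?thesis .
qed

lemma Esum_l1_bound:
  assumes f: "\<forall>i. \<bar>f i\<bar> \<le> 1/2" and L: "l1 X \<le> L" "l1 Y \<le> L"
  shows "l1 (Esum n f X Y) \<le> (real n + 1) / 2 * L ^ n"
proof -
  have L0: "L \<ge> 0" using L(1) l1_nonneg order.trans by blast
  have "l1 (Esum n f X Y) \<le> (\<Sum>i\<le>n. l1 (smult (of_real (f i)) (X ^ i * Y ^ (n - i))))"
    unfolding Esum_def by (rule l1_sum)
  also have "\<dots> \<le> (\<Sum>i\<le>n. 1/2 * L ^ n)"
  proof (rule sum_mono)
    fix i assume i: "i \<in> {..n}"
    have "l1 (smult (of_real (f i)) (X ^ i * Y ^ (n - i))) = \<bar>f i\<bar> * l1 (X ^ i * Y ^ (n - i))"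
      by (simp add: l1_smult)
    also have "\<dots> \<le> \<bar>f i\<bar> * (l1 X ^ i * l1 Y ^ (n - i))"
      by (intro mult_left_mono order.trans[OF l1_mult] mult_mono l1_power) (auto simp: l1_nonneg)
    also have "\<dots> \<le> 1/2 * (L ^ i * L ^ (n - i))"
      using f L by (intro mult_mono power_mono) (auto simp: L0 l1_nonneg)
    also have "\<dots> = 1/2 * L ^ n" using i by (simp add: power_add[symmetric])
    finally show "l1 (smult (of_real (f i)) (X ^ i * Y ^ (n - i))) \<le> 1/2 * L ^ n" .
  qed
  also have "\<dots> = (real n + 1) / 2 * L ^ n" by simp
  finally show ?thesis .
qed




definition rc :: "complex poly \<Rightarrow> bool" where
  "rc R \<longleftrightarrow> (\<forall>k. coeff R k \<in> \<real>)"

lemma rc_add: "rc A \<Longrightarrow> rc B \<Longrightarrow> rc (A + B)" by (simp add: rc_def)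
lemma rc_diff: "rc A \<Longrightarrow> rc B \<Longrightarrow> rc (A - B)" by (simp add: rc_def)
lemma rc_smult: "rc A \<Longrightarrow> rc (smult (of_real a) A)" by (simp add: rc_def)
lemma rc_mult: "rc A \<Longrightarrow> rc B \<Longrightarrow> rc (A * B)"
  unfolding rc_def coeff_mult by (auto intro!: sum_in_Reals Reals_mult)
lemma rc_power: "rc A \<Longrightarrow> rc (A ^ k)"
  by (induction k) (auto simp: rc_mult, simp add: rc_def coeff_1)
lemma rc_lin: "rc [:of_real a, of_real b:]" by (simp add: rc_def coeff_pCons split: nat.split)
lemma rc_mpi: "rc (map_poly of_int P)" by (simp add: rc_def coeff_mpi)

lemma hom_N:
  fixes R :: "int poly" and a b :: int and root :: "nat \<Rightarrow> complex"
  assumes dR: "degree R = n" and fac: "smult (of_int (lead_coeff R)) (\<Prod>i<n. [:-root i, 1:]) = map_poly of_int R"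
    and b0: "b \<noteq> 0"
  shows "(of_int (\<Sum>k\<le>n. coeff R k * a ^ k * b ^ (n - k)) :: complex)
       = of_int (lead_coeff R) * (\<Prod>i<n. of_int a - of_int b * root i)"
proof -
  define z :: complex where "z = of_int a / of_int b"
  have bc: "(of_int b :: complex) \<noteq> 0" using b0 by simp
  have "poly (map_poly of_int R) z = (\<Sum>k\<le>n. of_int (coeff R k) * z ^ k)"
    by (simp add: poly_altdef degree_mpi dR coeff_mpi)
  then have "of_int b ^ n * poly (map_poly of_int R) z = (\<Sum>k\<le>n. of_int (coeff R k) * (of_int b ^ n * z ^ k))"
    by (simp add: sum_distrib_left mult_ac)
  also have "\<dots> = (\<Sum>k\<le>n. of_int (coeff R k * a ^ k * b ^ (n - k)))"
  proof (intro sum.cong refl)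
    fix k assume "k \<in> {..n}"
    then have "of_int b ^ n = (of_int b :: complex) ^ k * of_int b ^ (n - k)"
      by (simp add: power_add[symmetric])
    then have "of_int b ^ n * z ^ k = (of_int a :: complex) ^ k * of_int b ^ (n - k)"
      unfolding z_def using bc by (simp add: power_divide field_simps)
    then show "of_int (coeff R k) * (of_int b ^ n * z ^ k) = of_int (coeff R k * a ^ k * b ^ (n - k))"
      by simp
  qed
  finally have L: "of_int b ^ n * poly (map_poly of_int R) z = of_int (\<Sum>k\<le>n. coeff R k * a ^ k * b ^ (n - k))"
    by simp
  have "poly (map_poly of_int R) z = of_int (lead_coeff R) * (\<Prod>i<n. z - root i)"
    by (subst fac[symmetric]) (simp add: poly_prod)
  then have "of_int b ^ n * poly (map_poly of_int R) z = of_int (lead_coeff R) * (\<Prod>i<n. of_int b * (z - root i))"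
    by (simp add: prod.distrib mult_ac)
  also have "(\<Prod>i<n. of_int b * (z - root i)) = (\<Prod>i<n. of_int a - of_int b * root i)"
    unfolding z_def using bc by (intro prod.cong refl) (simp add: field_simps)
  finally show ?thesis using L by simp
qed

context
  fixes \<xi> :: real and n :: nat and p q p' q' :: int and C Q0 :: real
  assumes n1: "n \<ge> 1" and det: "p * q' - p' * q = 1" and qpos: "q > 0" and C1: "C \<ge> 1" and Q01: "Q0 \<ge> 1"
    and bq: "\<bar>real_of_int q\<bar> \<le> C * Q0" and bq': "\<bar>real_of_int q'\<bar> \<le> C * Q0"
    and bl: "\<bar>of_int q * \<xi> - of_int p\<bar> \<le> C / Q0" and bl': "\<bar>of_int q' * \<xi> - of_int p'\<bar> \<le> C / Q0"
begin

lemma T_id: "[:0, 1:] = smult (of_real (of_int p)) (XXc p' q') + smult (of_real (of_int (- p'))) (XXc p q)"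
proof -
  have "complex_of_int (p * q' - p' * q) = 1" using det by simp
  then show ?thesis by (simp add: XXc_def algebra_simps)
qed

lemma O_id: "1 = smult (of_real (of_int q)) (XXc p' q') + smult (of_real (of_int (- q'))) (XXc p q)"
proof -
  have "complex_of_int (p * q' - p' * q) = 1" using det by simp
  then show ?thesis by (simp add: XXc_def algebra_simps one_pCons)
qed

lemma lin_bound:
  assumes bb: "\<bar>real_of_int b\<bar> \<le> C * Q0" and ba: "\<bar>of_int b * \<xi> - of_int a\<bar> \<le> C / Q0"
  shows "cmod (poly (XXc a b) z) \<le> C * Q0 * cmod (z - of_real \<xi>) + C / Q0"
proof -
  have "poly (XXc a b) z = of_int b * (z - of_real \<xi>) + of_real (of_int b * \<xi> - of_int a)"
    by (simp add: poly_XXc algebra_simps)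
  then have "cmod (poly (XXc a b) z) \<le> cmod (of_int b * (z - of_real \<xi>)) + cmod (of_real (of_int b * \<xi> - of_int a) :: complex)"
    by (metis norm_triangle_ineq)
  also have "\<dots> = \<bar>real_of_int b\<bar> * cmod (z - of_real \<xi>) + \<bar>of_int b * \<xi> - of_int a\<bar>"
    by (simp only: norm_mult norm_of_real norm_of_int)
  also have "\<dots> \<le> C * Q0 * cmod (z - of_real \<xi>) + C / Q0"
    using bb ba by (intro add_mono mult_right_mono) auto
  finally show ?thesis .
qed

lemma lin_bound2:
  assumes bb: "\<bar>real_of_int b\<bar> \<le> C * Q0" and ba: "\<bar>of_int b * \<xi> - of_int a\<bar> \<le> C / Q0"
    and far: "cmod (z - of_real \<xi>) \<ge> 1 / Q0^2"
  shows "cmod (poly (XXc a b) z) \<le> 2 * C * Q0 * cmod (z - of_real \<xi>)"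
proof -
  have "C / Q0 = C * Q0 * (1 / Q0^2)" using Q01 by (simp add: power2_eq_square field_simps)
  also have "\<dots> \<le> C * Q0 * cmod (z - of_real \<xi>)" using far C1 Q01 by (intro mult_left_mono) auto
  finally show ?thesis using lin_bound[OF bb ba, of z] by simp
qed

lemma l1_lin_bound:
  assumes bb: "\<bar>real_of_int b\<bar> \<le> C * Q0" and ba: "\<bar>of_int b * \<xi> - of_int a\<bar> \<le> C / Q0"
  shows "l1 (XXc a b) \<le> C * Q0 * (\<bar>\<xi>\<bar> + 2)"
proof -
  have "\<bar>real_of_int a\<bar> \<le> \<bar>real_of_int b\<bar> * \<bar>\<xi>\<bar> + \<bar>of_int b * \<xi> - of_int a\<bar>"
    by (metis abs_mult abs_minus_commute abs_triangle_ineq2 add.commute diff_le_eq)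
  also have "\<dots> \<le> C * Q0 * \<bar>\<xi>\<bar> + C * Q0"
  proof -
    have "C / Q0 \<le> C * Q0" using C1 Q01 by (simp add: field_simps) (metis mult_mono' order.trans less_imp_le mult_1_left one_le_power power2_eq_square zero_le_one dual_order.trans linear)
    then show ?thesis using bb ba by (intro add_mono mult_right_mono) auto
  qed
  finally have "\<bar>real_of_int a\<bar> \<le> C * Q0 * \<bar>\<xi>\<bar> + C * Q0" .
  then show ?thesis using bb by (simp add: XXc_def l1_lin algebra_simps)
qed

lemma err_far:
  assumes f: "\<forall>i. \<bar>f i\<bar> \<le> 1/2" and far: "cmod (z - of_real \<xi>) \<ge> 1 / Q0^2"
  shows "cmod (poly (Esum n f (XXc p' q') (XXc p q)) z) \<le> (real n + 1) / 2 * (2 * C) ^ n * Q0 ^ n * cmod (z - of_real \<xi>) ^ n"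
proof -
  have "cmod (poly (Esum n f (XXc p' q') (XXc p q)) z) \<le> (real n + 1) / 2 * (2 * C * Q0 * cmod (z - of_real \<xi>)) ^ n"
    by (rule Esum_poly_bound[OF f lin_bound2[OF bq' bl' far] lin_bound2[OF bq bl far]])
  then show ?thesis by (simp add: power_mult_distrib mult_ac)
qed

lemma err_l1:
  assumes f: "\<forall>i. \<bar>f i\<bar> \<le> 1/2"
  shows "l1 (Esum n f (XXc p' q') (XXc p q)) \<le> (real n + 1) / 2 * (C * (\<bar>\<xi>\<bar> + 2)) ^ n * Q0 ^ n"
proof -
  have "l1 (Esum n f (XXc p' q') (XXc p q)) \<le> (real n + 1) / 2 * (C * Q0 * (\<bar>\<xi>\<bar> + 2)) ^ n"
    by (rule Esum_l1_bound[OF f l1_lin_bound[OF bq' bl'] l1_lin_bound[OF bq bl]])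
  then show ?thesis by (simp add: power_mult_distrib mult_ac)
qed

lemma approx_poly:
  assumes "degree W \<le> n" "rc W"
  shows "\<exists>R f. degree R \<le> n \<and> (\<forall>i. \<bar>f i\<bar> \<le> 1/2) \<and>
     map_poly of_int R = W - Esum n f (XXc p' q') (XXc p q)"
  using round_S[OF inS_all[OF T_id O_id assms(1) assms(2)[unfolded rc_def]]] .


lemma partA:
  assumes QC: "Q0 > C"
  shows "\<exists>\<alpha>. is_algebraic \<alpha> \<and> alg_degree \<alpha> = n \<and>
     (\<forall>\<beta>\<in>conjugates \<alpha>. cmod (complex_of_real \<xi> - \<beta>) < 1 / Q0^2) \<and>
     (Q0 / (2 * C)) ^ n \<le> real_of_int (alg_height \<alpha>) \<and>
     real_of_int (alg_height \<alpha>) \<le> ((2 * (real n + 1) * (2 * C) ^ n + 1) * (1 + \<bar>\<xi>\<bar>) ^ n + 2 * (real n + 1) * (C * (\<bar>\<xi>\<bar> + 2)) ^ n) * Q0 ^ n"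
proof -
  define K0 where "K0 = (real n + 1) / 2 * (2 * C) ^ n"
  define M where "M = 4 * K0 + 1"
  define A where "A = M * Q0 ^ n"
  have K0pos: "K0 > 0" unfolding K0_def using C1 by simp
  have Apos: "A > 0" unfolding A_def M_def using K0pos Q01 by simp
  define L where "L = [:- complex_of_real \<xi>, 1:]"
  define V where "V = smult (of_real A) (L ^ n)"
  define P0 :: "int poly" where "P0 = monom 1 n + [:2:]"
  define W where "W = smult (of_real (1/4)) (V - map_poly of_int P0)"
  have rcL: "rc L" unfolding L_def using rc_lin[of "-\<xi>" 1] by simp
  have rcW: "rc W" unfolding W_def V_def
    by (intro rc_smult rc_diff rc_power rcL rc_mpi)
  have dL: "degree L = 1" unfolding L_def by simp
  have dV: "degree V \<le> n" unfolding V_def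
    using degree_smult_le[of _ "L ^ n"] degree_power_le[of L n] dL by (metis mult_1 order.trans)
  have dP0: "degree (map_poly of_int P0 :: complex poly) \<le> n" unfolding P0_def degree_mpi
    by (intro degree_add_le) (auto simp: degree_monom_le)
  have dW: "degree W \<le> n" unfolding W_def
    by (rule order.trans[OF degree_smult_le degree_diff_le[OF dV dP0]])
  obtain R f where R: "degree R \<le> n" "\<forall>i. \<bar>f i\<bar> \<le> 1/2"
    and Req: "map_poly of_int R = W - Esum n f (XXc p' q') (XXc p q)"
    using approx_poly[OF dW rcW] by blast
  define E where "E = Esum n f (XXc p' q') (XXc p q)"
  define P where "P = P0 + smult 4 R"
  have PC: "map_poly of_int P = V - smult 4 E"
  proof -
    have "(map_poly of_int P :: complex poly) = map_poly of_int P0 + smult 4 (map_poly of_int R)"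
      unfolding P_def by (simp add: mpi_add mpi_smult)
    also have "\<dots> = V - smult 4 E" unfolding Req W_def E_def
      by (simp add: algebra_simps smult_diff_right smult_add_right smult_smult)
    finally show ?thesis .
  qed
  have cP: "coeff P k = (if k = n then 1 else 0) + (if k = 0 then 2 else 0) + 4 * coeff R k" for k
    unfolding P_def P0_def by (simp add: coeff_monom coeff_pCons split: nat.split)
  have dP: "degree P = n"
  proof (rule antisym)
    show "degree P \<le> n" unfolding P_def P0_def
      by (intro degree_add_le order.trans[OF degree_smult_le R(1)]) (auto simp: degree_monom_le)
    have "coeff P n \<noteq> 0" using cP[of n] n1 by presburger
    then show "n \<le> degree P" by (rule le_degree)
  qed
  have P_odd: "odd (lead_coeff P)" using cP[of n] n1 dP by simp
  have P_ev: "even (coeff P k)" if "0 < k" "k < n" for k using cP[of k] that by simp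
  have P_c0: "coeff P 0 mod 4 = 2" using cP[of 0] n1 by simp
  have P0': "P \<noteq> 0" using dP n1 by auto
  have rootsP: "cmod (z - of_real \<xi>) < 1 / Q0^2" if z: "poly (map_poly of_int P) z = 0" for z
  proof (rule ccontr)
    assume "\<not> cmod (z - of_real \<xi>) < 1 / Q0^2"
    then have far: "cmod (z - of_real \<xi>) \<ge> 1 / Q0^2" by simp
    define \<rho> where "\<rho> = cmod (z - of_real \<xi>)"
    have \<rho>pos: "\<rho> > 0" using far Q01 unfolding \<rho>_def by (smt (verit) divide_pos_pos zero_less_power)
    have "cmod (poly (smult 4 E) z) = 4 * cmod (poly E z)" by (simp add: norm_mult)
    also have "\<dots> \<le> 4 * (K0 * Q0 ^ n * \<rho> ^ n)" unfolding E_def K0_def \<rho>_def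
      using err_far[OF R(2) far] by (simp add: mult_ac)
    also have "\<dots> < A * \<rho> ^ n" unfolding A_def M_def using \<rho>pos Q01 by (simp add: algebra_simps)
    finally have lt: "cmod (poly (smult 4 E) z) < A * \<rho> ^ n" .
    have "cmod (poly V z) = A * \<rho> ^ n" unfolding V_def L_def \<rho>_def using Apos
      by (simp add: norm_mult norm_power)
    moreover have "poly V z = poly (smult 4 E) z" using z PC by simp
    ultimately show False using lt by simp
  qed
  define Pp where "Pp = primitive_part P"
  define s :: int where "s = (if lead_coeff Pp > 0 then 1 else -1)"
  define Pm where "Pm = smult s Pp"
  define d where "d = content P * s"
  have s2: "s * s = 1" unfolding s_def by simp
  have PPm: "P = smult d Pm"
  proof -
    have "smult d Pm = smult (content P * (s * s)) Pp" by (simp add: Pm_def d_def smult_smult mult_ac)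
    also have "\<dots> = P" unfolding s2 Pp_def by simp
    finally show ?thesis by simp
  qed
  have d0: "d \<noteq> 0" using PPm P0' by auto
  have Pm0: "Pm \<noteq> 0" using PPm P0' by auto
  have cPm: "coeff P k = d * coeff Pm k" for k using PPm by simp
  have dPm: "degree Pm = n" using PPm d0 dP by simp
  have contPm: "content Pm = 1" unfolding Pm_def Pp_def using P0' s_def by simp
  have lPm: "lead_coeff Pm > 0"
  proof -
    have "Pp \<noteq> 0" unfolding Pp_def using P0' by simp
    then have "lead_coeff Pp \<noteq> 0" by simp
    then have "lead_coeff Pp > 0 \<or> lead_coeff Pp < 0" by linarith
    then show ?thesis unfolding Pm_def s_def by auto
  qed
  have d_odd: "odd d" using P_odd cPm[of n] dP dPm by simp
  have Pm_odd: "odd (lead_coeff Pm)" using P_odd cPm[of n] dP dPm by simp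
  have Pm_ev: "\<forall>k. 0 < k \<and> k < degree Pm \<longrightarrow> even (coeff Pm k)"
    using P_ev cPm d_odd dPm by auto
  have Pm_c0: "coeff Pm 0 mod 4 = 2"
  proof -
    have "even (coeff P 0)" using P_c0 by presburger
    then have e: "even (coeff Pm 0)" using cPm[of 0] d_odd by simp
    then obtain y where y: "coeff Pm 0 = 2 * y" by blast
    have "(2 * (d * y)) mod 4 = 2" using P_c0 cPm[of 0] y by (simp add: mult_ac)
    moreover have aux: "\<And>w::int. 2 * w mod 4 = 2 \<Longrightarrow> odd w" by presburger
    ultimately have "odd (d * y)" by blast
    then have "odd y" by simp
    moreover have aux2: "\<And>w::int. odd w \<Longrightarrow> 2 * w mod 4 = 2" by presburger
    ultimately show ?thesis using y by simp
  qed
  have irr: "irreducible Pm"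
    using eisenstein_irreducible[OF contPm _ Pm_odd Pm_ev Pm_c0] dPm n1 by simp
  have polyPm: "poly (map_poly of_int P) z = of_int d * poly (map_poly of_int Pm) z" for z :: complex
    using PPm by (simp add: mpi_smult)
  obtain root where fac: "smult (lead_coeff (map_poly of_int Pm :: complex poly)) (\<Prod>i<degree (map_poly of_int Pm :: complex poly). [:-root i, 1:]) = (map_poly of_int Pm :: complex poly)"
    by (rule complex_poly_decompose')
  have lc_map: "lead_coeff (map_poly of_int Pm :: complex poly) = of_int (lead_coeff Pm)"
    by (simp add: degree_mpi coeff_mpi)
  have fac': "smult (of_int (lead_coeff Pm)) (\<Prod>i<n. [:-root i, 1:]) = (map_poly of_int Pm :: complex poly)"
    using fac lc_map dPm by (simp add: degree_mpi)
  have root_is: "poly (map_poly of_int Pm) (root i) = 0" if "i < n" for i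
  proof -
    have "poly (map_poly of_int Pm) (root i) = of_int (lead_coeff Pm) * (\<Prod>j<n. root i - root j)"
      by (subst fac'[symmetric]) (simp add: poly_prod)
    also have "(\<Prod>j<n. root i - root j) = 0" using that by (intro prod_zero) auto
    finally show ?thesis by simp
  qed
  define \<alpha> where "\<alpha> = root 0"
  have r\<alpha>: "poly (map_poly of_int Pm) \<alpha> = 0" unfolding \<alpha>_def using root_is n1 by simp
  have mip: "min_int_poly \<alpha> = Pm" by (rule min_int_poly_eq[OF irr lPm r\<alpha>])
  have alg: "is_algebraic \<alpha>" unfolding is_algebraic_def using Pm0 r\<alpha> by blast
  have deg: "alg_degree \<alpha> = n" unfolding alg_degree_def mip dPm ..
  have close_Pm: "cmod (z - of_real \<xi>) < 1 / Q0^2" if "poly (map_poly of_int Pm) z = 0" for z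
    using rootsP[of z] polyPm[of z] that by simp
  have conj: "\<forall>\<beta>\<in>conjugates \<alpha>. cmod (complex_of_real \<xi> - \<beta>) < 1 / Q0^2"
    unfolding conjugates_def mip using close_Pm by (simp add: norm_minus_commute)
  have qne: "q' \<noteq> 0 \<or> odd p"
  proof (rule ccontr)
    assume "\<not> (q' \<noteq> 0 \<or> odd p)"
    then have "q' = 0" by simp
    then have "p' * q = -1" using det by simp
    then have "p' * (- q) = 1" by simp
    then have "p' dvd 1" by (metis dvd_triv_left)
    then have "\<bar>p'\<bar> = 1" by (simp add: zdvd1_eq)
    then have "\<bar>of_int q' * \<xi> - of_int p'\<bar> = 1" using \<open>q' = 0\<close> by simp
    then show False using bl' QC C1 by (simp add: field_simps)
  qed
  obtain a b where ab: "b \<noteq> 0" "odd a" "\<bar>real_of_int b\<bar> \<le> C * Q0" "\<bar>of_int b * \<xi> - of_int a\<bar> \<le> C / Q0"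
  proof (cases "odd p")
    case True
    then show ?thesis using that[of q p] qpos bq bl by simp
  next
    case False
    then have "q' \<noteq> 0" using qne by simp
    moreover have "odd p'" using False det by (metis dvd_diff dvd_mult2 dvd_mult even_add odd_one)
    ultimately show ?thesis using that[of q' p'] bq' bl' by simp
  qed
  define N where "N = (\<Sum>k\<le>n. coeff Pm k * a ^ k * b ^ (n - k))"
  have N_odd: "odd N"
  proof -
    have "N = (\<Sum>k<n. coeff Pm k * a ^ k * b ^ (n - k)) + coeff Pm n * a ^ n"
      unfolding N_def by (simp add: lessThan_Suc_atMost[symmetric])
    moreover have "even (\<Sum>k<n. coeff Pm k * a ^ k * b ^ (n - k))"
    proof (rule dvd_sum)
      fix k assume "k \<in> {..<n}"
      then have "even (coeff Pm k)" using Pm_ev Pm_c0 dPm by (cases "k = 0") (auto, presburger)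
      then show "even (coeff Pm k * a ^ k * b ^ (n - k))" by simp
    qed
    moreover have "odd (coeff Pm n * a ^ n)" using Pm_odd dPm ab(2) by simp
    ultimately show ?thesis by simp
  qed
  have Nhom: "(of_int N :: complex) = of_int (lead_coeff Pm) * (\<Prod>i<n. of_int a - of_int b * root i)"
    unfolding N_def by (rule hom_N[OF dPm fac' ab(1)])
  have fac_bound: "cmod (of_int a - of_int b * root i) \<le> 2 * C / Q0" if "i < n" for i
  proof -
    have ri: "cmod (root i - of_real \<xi>) < 1 / Q0^2" using close_Pm root_is that by blast
    have "of_int a - of_int b * root i = - (of_real (of_int b * \<xi> - of_int a) + of_int b * (root i - of_real \<xi>))"
      by (simp add: algebra_simps)
    then have "cmod (of_int a - of_int b * root i) \<le> \<bar>of_int b * \<xi> - of_int a\<bar> + \<bar>real_of_int b\<bar> * cmod (root i - of_real \<xi>)"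
      by (metis norm_minus_cancel norm_triangle_ineq norm_mult norm_of_real norm_of_int)
    also have "\<dots> \<le> C / Q0 + C * Q0 * (1 / Q0^2)"
      using ab ri by (intro add_mono mult_mono) auto
    also have "\<dots> = 2 * C / Q0" using Q01 by (simp add: power2_eq_square field_simps)
    finally show ?thesis .
  qed
  have "N \<noteq> 0" using N_odd by auto
  then have "(1::int) \<le> \<bar>N\<bar>" by linarith
  then have "1 \<le> \<bar>real_of_int N\<bar>" by (metis of_int_1_le_iff of_int_abs)
  also have "\<bar>real_of_int N\<bar> = cmod (of_int N :: complex)" by (simp only: norm_of_int)
  also have "\<dots> = real_of_int (lead_coeff Pm) * (\<Prod>i<n. cmod (of_int a - of_int b * root i))"
    using lPm by (simp add: Nhom norm_mult prod_norm)
  also have "\<dots> \<le> real_of_int (lead_coeff Pm) * (\<Prod>i<n. 2 * C / Q0)"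
    using lPm fac_bound by (intro mult_left_mono prod_mono) auto
  finally have "1 \<le> real_of_int (lead_coeff Pm) * (2 * C / Q0) ^ n" by simp
  then have lowlead: "(Q0 / (2 * C)) ^ n \<le> real_of_int (lead_coeff Pm)"
    using C1 Q01 by (simp add: power_divide field_simps)
  have low: "(Q0 / (2 * C)) ^ n \<le> real_of_int (alg_height \<alpha>)"
    unfolding alg_height_def mip using lowlead height_ge[of Pm "degree Pm"]
    by (smt (verit) of_int_le_iff)
  define KA where "KA = ((2 * (real n + 1) * (2 * C) ^ n + 1) * (1 + \<bar>\<xi>\<bar>) ^ n + 2 * (real n + 1) * (C * (\<bar>\<xi>\<bar> + 2)) ^ n) * Q0 ^ n"
  have "l1 (map_poly of_int P) \<le> l1 V + l1 (smult 4 E)" using PC l1_diff by metis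
  also have "\<dots> \<le> A * (1 + \<bar>\<xi>\<bar>) ^ n + 4 * ((real n + 1) / 2 * (C * (\<bar>\<xi>\<bar> + 2)) ^ n * Q0 ^ n)"
  proof (intro add_mono)
    have "l1 V = A * l1 (L ^ n)" unfolding V_def using Apos by (simp add: l1_smult)
    also have "\<dots> \<le> A * (1 + \<bar>\<xi>\<bar>) ^ n"
      using Apos l1_power[of L n] by (intro mult_left_mono) (auto simp: L_def l1_lin add.commute)
    finally show "l1 V \<le> A * (1 + \<bar>\<xi>\<bar>) ^ n" .
    show "l1 (smult 4 E) \<le> 4 * ((real n + 1) / 2 * (C * (\<bar>\<xi>\<bar> + 2)) ^ n * Q0 ^ n)"
      unfolding E_def using err_l1[OF R(2)] by (simp add: l1_smult mult_ac)
  qed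
  also have "\<dots> = KA" unfolding KA_def A_def M_def K0_def by (simp add: field_simps)
  finally have l1P: "l1 (map_poly of_int P) \<le> KA" .
  have "\<bar>coeff Pm k\<bar> \<le> KA" for k
  proof -
    have "\<bar>coeff Pm k\<bar> \<le> \<bar>coeff P k\<bar>" using cPm[of k] d0 by (simp add: abs_mult) (metis abs_ge_self mult_le_cancel_right1 not_le zero_less_abs_iff mult_right_mono abs_ge_zero dual_order.trans int_one_le_iff_zero_less mult.commute)
    then have "real_of_int \<bar>coeff Pm k\<bar> \<le> cmod (coeff (map_poly of_int P) k :: complex)"
      by (simp add: coeff_mpi)
    also have "\<dots> \<le> KA" using coeff_le_l1 l1P order.trans by blast
    finally show ?thesis by simp
  qed
  then have up: "real_of_int (alg_height \<alpha>) \<le> KA"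
    unfolding alg_height_def mip by (meson height_le floor_le_iff le_floor_iff order_refl)
  show ?thesis using alg deg conj low up unfolding KA_def by blast
qed


lemma rc_monom: "rc (monom 1 k)" by (simp add: rc_def coeff_monom)

lemma l1_le_height: "l1 (map_poly of_int P) \<le> (real (degree P) + 1) * real_of_int (poly_height P)"
proof -
  have "l1 (map_poly of_int P) = (\<Sum>k\<le>degree P. real_of_int \<bar>coeff P k\<bar>)"
    unfolding l1_def by (simp add: degree_mpi coeff_mpi del: of_int_abs) (simp only: norm_of_int of_int_abs)
  also have "\<dots> \<le> (\<Sum>k\<le>degree P. real_of_int (poly_height P))"
    by (intro sum_mono) (metis height_ge of_int_abs of_int_le_iff)
  finally show ?thesis by (simp add: add.commute)
qed

lemma partB:
  assumes QC: "Q0 > C" and Qbig: "Q0^2 > 3 * 2^(3*n+3)"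
  shows "\<exists>\<alpha>. is_algebraic \<alpha> \<and> algebraic_integer \<alpha> \<and> alg_degree \<alpha> = n + 1 \<and>
     (\<forall>\<beta>\<in>conjugates \<alpha> - {\<alpha>}. cmod (complex_of_real \<xi> - \<beta>) < 1 / Q0^2) \<and>
     (8 * ((real n + 1) / 2 * (2 * C) ^ n) + 8) / (2 * (real n + 2) * (\<bar>\<xi>\<bar> + 1) ^ (n + 1)) * Q0 ^ n \<le> real_of_int (alg_height \<alpha>) \<and>
     real_of_int (alg_height \<alpha>) \<le> ((1 + \<bar>\<xi>\<bar>) ^ n * (8 * ((real n + 1) / 2 * (2 * C) ^ n) + 8 + \<bar>\<xi>\<bar> + 1) + 2 * (real n + 1) * (C * (\<bar>\<xi>\<bar> + 2)) ^ n) * Q0 ^ n"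
proof -
  define K0 where "K0 = (real n + 1) / 2 * (2 * C) ^ n"
  define M where "M = 8 * K0 + 8"
  define A where "A = M * Q0 ^ n"
  define r where "r = 1 / Q0^2"
  have K0pos: "K0 > 0" unfolding K0_def using C1 by simp
  have Q0n: "Q0 ^ n \<ge> 1" using Q01 by simp
  have AM: "A \<ge> M" unfolding A_def using Q0n K0pos M_def by simp
  have M8: "M \<ge> 8" unfolding M_def using K0pos by simp
  have A8: "A \<ge> 8" using AM M8 by simp
  have rpos: "r > 0" and r1: "r \<le> 1" unfolding r_def using Q01 by (auto simp: field_simps)
  have K0A: "4 * K0 * Q0 ^ n \<le> A / 2" unfolding A_def M_def using Q01 by (simp add: algebra_simps)
  define L where "L = [:- complex_of_real \<xi>, 1:]"
  define G where "G = L ^ n * [:complex_of_real (A - \<xi>), 1:]"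
  define V where "V = monom 1 (n + 1) - G"
  have rcL: "rc L" unfolding L_def using rc_lin[of "-\<xi>" 1] by simp
  have rcG: "rc G" unfolding G_def by (intro rc_mult rc_power rcL) (use rc_lin[of "A - \<xi>" 1] in simp)
  have rcV: "rc V" unfolding V_def by (intro rc_diff rc_monom rcG)
  have dG: "degree G = n + 1"
  proof -
    have Ln: "L ^ n \<noteq> 0" by (simp add: L_def)
    have dLn: "degree (L ^ n) = n" by (simp add: L_def degree_power_eq)
    have "degree G = degree (L ^ n) + degree [:complex_of_real (A - \<xi>), 1:]"
      unfolding G_def by (rule degree_mult_eq[OF Ln]) simp
    then show ?thesis using dLn by simp
  qed
  have lG: "lead_coeff G = 1" unfolding G_def
    by (subst lead_coeff_mult) (simp add: L_def lead_coeff_power)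
  have dV: "degree V \<le> n"
  proof (rule degree_le, intro allI impI)
    fix k assume "n < k"
    show "coeff V k = 0"
    proof (cases "k = n + 1")
      case True
      then show ?thesis unfolding V_def using lG dG by simp
    next
      case False
      then have "k > degree G" using \<open>n < k\<close> dG by simp
      then show ?thesis unfolding V_def using False by (simp add: coeff_eq_0 coeff_monom)
    qed
  qed
  define R0 :: "int poly" where "R0 = [:-2:]"
  define W where "W = smult (of_real (1/4)) (V - map_poly of_int R0)"
  have rcW: "rc W" unfolding W_def by (intro rc_smult rc_diff rcV rc_mpi)
  have dW: "degree W \<le> n" unfolding W_def
    by (rule order.trans[OF degree_smult_le degree_diff_le[OF dV]]) (simp add: R0_def mpi_const)
  obtain R f where R: "degree R \<le> n" "\<forall>i. \<bar>f i\<bar> \<le> 1/2"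
    and Req: "map_poly of_int R = W - Esum n f (XXc p' q') (XXc p q)"
    using approx_poly[OF dW rcW] by blast
  define E where "E = Esum n f (XXc p' q') (XXc p q)"
  define P where "P = monom 1 (n + 1) - (R0 + smult 4 R)"
  have PC: "(map_poly of_int P :: complex poly) = G + smult 4 E"
  proof -
    have "(map_poly of_int P :: complex poly) = monom 1 (n + 1) - (map_poly of_int R0 + smult 4 (map_poly of_int R))"
      unfolding P_def by (simp add: mpi_add mpi_diff mpi_smult map_poly_monom)
    also have "\<dots> = G + smult 4 E" unfolding Req W_def E_def V_def
      by (simp add: algebra_simps smult_diff_right smult_add_right smult_smult)
    finally show ?thesis .
  qed
  have cR: "coeff R k = 0" if "k > n" for k using R(1) that by (simp add: coeff_eq_0)
  have cP: "coeff P k = (if k = n + 1 then 1 else 0) + (if k = 0 then 2 else 0) - 4 * coeff R k" for k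
    unfolding P_def R0_def by (simp add: coeff_monom coeff_pCons split: nat.split)
  have dP: "degree P = n + 1"
  proof (rule antisym)
    show "degree P \<le> n + 1"
    proof (rule degree_le, intro allI impI)
      fix k assume "n + 1 < k" then show "coeff P k = 0" using cP[of k] cR[of k] by simp
    qed
    have "coeff P (n + 1) \<noteq> 0" using cP[of "n+1"] cR[of "n+1"] by simp
    then show "n + 1 \<le> degree P" by (rule le_degree)
  qed
  have lP: "lead_coeff P = 1" using dP cP[of "n+1"] cR[of "n+1"] by simp
  have P_ev: "\<forall>k. 0 < k \<and> k < degree P \<longrightarrow> even (coeff P k)" using cP dP by auto
  have P_c0: "coeff P 0 mod 4 = 2"
  proof -
    have aux: "\<And>w::int. (2 - 4 * w) mod 4 = 2" by presburger
    show ?thesis using cP[of 0] aux by simp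
  qed
  have contP: "content P = 1"
  proof -
    have "content P dvd 1" using content_dvd_coeff[of P "degree P"] lP by simp
    then show ?thesis by (metis normalize_content is_unit_normalize)
  qed
  have irr: "irreducible P"
    using eisenstein_irreducible[OF contP _ _ P_ev P_c0] dP lP by simp
  define Pc where "Pc = (map_poly of_int P :: complex poly)"
  obtain root where fac: "smult (lead_coeff Pc) (\<Prod>i<degree Pc. [:-root i, 1:]) = Pc"
    by (rule complex_poly_decompose')
  have dPc: "degree Pc = n + 1" unfolding Pc_def by (simp add: degree_mpi dP)
  have lPc: "lead_coeff Pc = 1" unfolding Pc_def by (simp add: degree_mpi coeff_mpi lP)
  have polyPc: "poly Pc z = (\<Prod>i<n+1. z - root i)" for z
  proof -
    have "poly Pc z = lead_coeff Pc * (\<Prod>i<degree Pc. z - root i)"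
      by (subst fac[symmetric]) (simp add: poly_prod)
    moreover have "coeff Pc (n + 1) = 1" using lPc dPc by simp
    ultimately show ?thesis by (simp add: dPc)
  qed
  have normPc: "cmod (poly Pc z) = (\<Prod>i<n+1. cmod (z - root i))" for z
    by (simp add: polyPc prod_norm)
  have root_is: "poly Pc (root i) = 0" if "i < n + 1" for i
    unfolding polyPc using that by (intro prod_zero) auto
  have roots_are: "\<exists>i<n+1. \<beta> = root i" if "poly Pc \<beta> = 0" for \<beta>
  proof -
    have "\<exists>i\<in>{..<n+1}. \<beta> - root i = 0" using that unfolding polyPc
      by (subst (asm) prod_zero_iff) auto
    then show ?thesis by auto
  qed
  have PCval: "poly Pc z = (z - of_real \<xi>) ^ n * ((z - of_real \<xi>) + of_real A) + 4 * poly E z" for z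
    unfolding Pc_def PC G_def L_def by (simp add: algebra_simps)
  have Eb: "cmod (4 * poly E z) \<le> 4 * K0 * Q0 ^ n * cmod (z - of_real \<xi>) ^ n"
    if "cmod (z - of_real \<xi>) \<ge> r" for z
    using err_far[OF R(2), of z] that unfolding r_def E_def K0_def by (simp add: norm_mult mult_ac)
  have annulus: "cmod (root i - of_real \<xi>) < r \<or> cmod (root i - of_real \<xi>) > A / 2" if "i < n + 1" for i
  proof (rule ccontr)
    define z where "z = root i"
    define \<rho> where "\<rho> = cmod (z - of_real \<xi>)"
    assume "\<not> ?thesis"
    then have h: "r \<le> \<rho>" "\<rho> \<le> A / 2" unfolding \<rho>_def z_def by auto
    have \<rho>pos: "\<rho> > 0" using h rpos by simp
    have "cmod ((z - of_real \<xi>) + of_real A) \<ge> A - \<rho>"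
    proof -
      have e: "(of_real A :: complex) - (- (z - of_real \<xi>)) = (z - of_real \<xi>) + of_real A" by (simp add: algebra_simps)
      have i: "cmod (of_real A :: complex) - cmod (- (z - of_real \<xi>)) \<le> cmod ((z - of_real \<xi>) + of_real A)"
        using norm_triangle_ineq2[of "of_real A :: complex" "- (z - of_real \<xi>)"] unfolding e .
      have c1: "cmod (of_real A :: complex) = A" using A8 by simp
      have c2: "cmod (- (z - of_real \<xi>)) = \<rho>" unfolding \<rho>_def by (simp only: norm_minus_cancel)
      show ?thesis using i c1 c2 by linarith
    qed
    then have "cmod ((z - of_real \<xi>) ^ n * ((z - of_real \<xi>) + of_real A)) \<ge> \<rho> ^ n * (A / 2)"
      using h \<rho>pos by (simp add: norm_mult norm_power \<rho>_def[symmetric])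
    moreover have "cmod (4 * poly E z) < \<rho> ^ n * (A / 2)"
    proof -
      have "cmod (4 * poly E z) \<le> 4 * K0 * Q0 ^ n * \<rho> ^ n" using Eb h unfolding \<rho>_def by blast
      also have "\<dots> < \<rho> ^ n * (A / 2)" unfolding A_def M_def using \<rho>pos Q01 by (simp add: algebra_simps)
      finally show ?thesis .
    qed
    moreover have "poly Pc z = 0" unfolding z_def using root_is that by simp
    ultimately show False unfolding PCval
    proof -
      assume a1: "\<rho> ^ n * (A / 2) \<le> cmod ((z - of_real \<xi>) ^ n * ((z - of_real \<xi>) + of_real A))"
        and a2: "cmod (4 * poly E z) < \<rho> ^ n * (A / 2)"
        and a3: "(z - of_real \<xi>) ^ n * ((z - of_real \<xi>) + of_real A) + 4 * poly E z = 0"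
      from a3 have "(z - of_real \<xi>) ^ n * ((z - of_real \<xi>) + of_real A) = - (4 * poly E z)"
        by (simp add: eq_neg_iff_add_eq_0)
      then have "cmod ((z - of_real \<xi>) ^ n * ((z - of_real \<xi>) + of_real A)) = cmod (4 * poly E z)"
        by (metis norm_minus_cancel)
      then show False using a1 a2 by linarith
    qed
  qed
  define S where "S = {i. i < n + 1 \<and> cmod (root i - of_real \<xi>) < r}"
  define Lg where "Lg = {i. i < n + 1 \<and> \<not> cmod (root i - of_real \<xi>) < r}"
  have SLg: "{..<n+1} = S \<union> Lg" "S \<inter> Lg = {}" unfolding S_def Lg_def by auto
  have finS: "finite S" "finite Lg" unfolding S_def Lg_def by auto
  have cardSL: "card S + card Lg = n + 1"
    using card_Un_disjoint[OF finS SLg(2)] SLg(1) by (metis card_lessThan)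
  have Lgbig: "cmod (root i - of_real \<xi>) > A / 2" if "i \<in> Lg" for i
    using annulus[of i] that unfolding Lg_def by auto
  have prod_split: "(\<Prod>i<n+1. g i) = (\<Prod>i\<in>S. g i) * (\<Prod>i\<in>Lg. g i)" for g :: "nat \<Rightarrow> real"
    unfolding SLg(1) by (rule prod.union_disjoint[OF finS SLg(2)])
  define PiL where "PiL = (\<Prod>i\<in>Lg. cmod (root i - of_real \<xi>))"
  have PiLpos: "PiL \<ge> 0" unfolding PiL_def by (simp add: prod_nonneg)
  have tri_e: "(w - of_real \<xi>) - (root i - of_real \<xi>) = w - root i" for w i by (simp add: algebra_simps)
  have tri_up: "cmod (w - root i) \<le> cmod (w - of_real \<xi>) + cmod (root i - of_real \<xi>)" for w i
    using norm_triangle_ineq4[of "w - of_real \<xi>" "root i - of_real \<xi>"] unfolding tri_e .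
  have tri_lo1: "cmod (w - of_real \<xi>) - cmod (root i - of_real \<xi>) \<le> cmod (w - root i)" for w i
    using norm_triangle_ineq2[of "w - of_real \<xi>" "root i - of_real \<xi>"] unfolding tri_e .
  have tri_lo2: "cmod (root i - of_real \<xi>) - cmod (w - of_real \<xi>) \<le> cmod (w - root i)" for w i
    using norm_triangle_ineq3[of "w - of_real \<xi>" "root i - of_real \<xi>"] unfolding tri_e by linarith
  define z2 where "z2 = complex_of_real (\<xi> + 1)"
  have z2d: "z2 - of_real \<xi> = 1" unfolding z2_def by simp
  have low2: "cmod (poly Pc z2) \<ge> A / 2"
  proof -
    have "cmod (4 * poly E z2) \<le> 4 * K0 * Q0 ^ n" using Eb[of z2] z2d r1 by simp
    also have "\<dots> \<le> A / 2" by (rule K0A)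
    finally have e: "cmod (4 * poly E z2) \<le> A / 2" .
    have "1 + complex_of_real A = complex_of_real (1 + A)" by simp
    then have c: "cmod (1 + complex_of_real A) = 1 + A" using A8 by (simp only: norm_of_real)
    have "poly Pc z2 = (1 + complex_of_real A) + 4 * poly E z2" unfolding PCval z2d by simp
    then have "cmod (poly Pc z2) \<ge> cmod (1 + complex_of_real A) - cmod (4 * poly E z2)"
      by (metis norm_diff_ineq)
    then show ?thesis using c e by linarith
  qed
  have up2: "cmod (poly Pc z2) \<le> 2 ^ (n + 1) * PiL"
  proof -
    have "cmod (poly Pc z2) = (\<Prod>i\<in>S. cmod (z2 - root i)) * (\<Prod>i\<in>Lg. cmod (z2 - root i))"
      unfolding normPc by (rule prod_split)
    also have "\<dots> \<le> (\<Prod>i\<in>S. 2) * (\<Prod>i\<in>Lg. 2 * cmod (root i - of_real \<xi>))"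
    proof (intro mult_mono prod_mono conjI)
      fix i assume "i \<in> S"
      then have "cmod (root i - of_real \<xi>) < r" unfolding S_def by simp
      then have "cmod (z2 - root i) \<le> 1 + r"
        using tri_up[of z2 i] z2d by simp
      then show "cmod (z2 - root i) \<le> 2" using r1 by simp
    next
      fix i assume "i \<in> Lg"
      then have "cmod (root i - of_real \<xi>) \<ge> 1" using Lgbig[of i] A8 by simp
      moreover have "cmod (z2 - root i) \<le> 1 + cmod (root i - of_real \<xi>)"
        using tri_up[of z2 i] z2d by simp
      ultimately show "cmod (z2 - root i) \<le> 2 * cmod (root i - of_real \<xi>)" by simp
    qed (auto simp: prod_nonneg)
    also have "\<dots> = 2 ^ (card S) * 2 ^ (card Lg) * PiL" unfolding PiL_def by (simp add: prod.distrib)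
    also have "\<dots> = 2 ^ (n + 1) * PiL" using cardSL by (simp add: power_add[symmetric])
    finally show ?thesis .
  qed
  have PiLlow: "A / 2 ^ (n + 2) \<le> PiL" using low2 up2 by (simp add: field_simps)
  define z1 where "z1 = complex_of_real (\<xi> + 2 * r)"
  have z1d: "z1 - of_real \<xi> = of_real (2 * r)" unfolding z1_def by simp
  have up1: "cmod (poly Pc z1) \<le> 3 * A * (2 * r) ^ n"
  proof -
    have e: "cmod (4 * poly E z1) \<le> 4 * K0 * Q0 ^ n * (2 * r) ^ n" using Eb[of z1] z1d rpos by simp
    also have "\<dots> \<le> A / 2 * (2 * r) ^ n" using K0A rpos by (intro mult_right_mono) auto
    finally have e': "cmod (4 * poly E z1) \<le> A / 2 * (2 * r) ^ n" .
    have "cmod ((z1 - of_real \<xi>) ^ n * ((z1 - of_real \<xi>) + of_real A)) = (2 * r) ^ n * (2 * r + A)"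
    proof -
      have "of_real (2 * r) + complex_of_real A = of_real (2 * r + A)" by simp
      then have "cmod (of_real (2 * r) + complex_of_real A) = 2 * r + A" using rpos A8 by (simp only: norm_of_real; simp)
      then show ?thesis unfolding z1d using rpos by (simp only: norm_mult norm_power norm_of_real; simp)
    qed
    also have "\<dots> \<le> (2 * r) ^ n * (2 * A)" using rpos r1 A8 by (intro mult_left_mono) auto
    finally have m: "cmod ((z1 - of_real \<xi>) ^ n * ((z1 - of_real \<xi>) + of_real A)) \<le> (2 * r) ^ n * (2 * A)" .
    have "cmod (poly Pc z1) \<le> (2 * r) ^ n * (2 * A) + A / 2 * (2 * r) ^ n"
      unfolding PCval using m e' norm_triangle_ineq[of "(z1 - of_real \<xi>) ^ n * ((z1 - of_real \<xi>) + of_real A)" "4 * poly E z1"]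
      by linarith
    also have "\<dots> \<le> 3 * A * (2 * r) ^ n" using rpos A8 by (simp add: algebra_simps)
    finally show ?thesis .
  qed
  have low1: "cmod (poly Pc z1) \<ge> r ^ card S * (PiL / 2 ^ card Lg)"
  proof -
    have "r ^ card S * (PiL / 2 ^ card Lg) = (\<Prod>i\<in>S. r) * (\<Prod>i\<in>Lg. cmod (root i - of_real \<xi>) / 2)"
      unfolding PiL_def by (simp add: prod_dividef)
    also have "\<dots> \<le> (\<Prod>i\<in>S. cmod (z1 - root i)) * (\<Prod>i\<in>Lg. cmod (z1 - root i))"
    proof (intro mult_mono prod_mono conjI)
      fix i assume "i \<in> S"
      then have "cmod (root i - of_real \<xi>) < r" unfolding S_def by simp
      moreover have "cmod (z1 - root i) \<ge> 2 * r - cmod (root i - of_real \<xi>)"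
        using tri_lo1[of z1 i] z1d rpos by simp
      ultimately show "r \<le> cmod (z1 - root i)" by simp
    next
      fix i assume "i \<in> Lg"
      then have big: "cmod (root i - of_real \<xi>) > A / 2" using Lgbig by simp
      have "cmod (z1 - root i) \<ge> cmod (root i - of_real \<xi>) - 2 * r"
        using tri_lo2[of i z1] z1d rpos by simp
      moreover have "4 * r \<le> A / 2" using r1 A8 by simp
      ultimately show "cmod (root i - of_real \<xi>) / 2 \<le> cmod (z1 - root i)" using big by simp
    qed (auto simp: prod_nonneg rpos less_imp_le)
    also have "\<dots> = cmod (poly Pc z1)" unfolding normPc by (rule prod_split[symmetric])
    finally show ?thesis .
  qed
  have cardLg: "card Lg \<le> 1"
  proof (rule ccontr)
    assume "\<not> card Lg \<le> 1"
    then have cL: "card Lg \<ge> 2" by simp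
    then have cS: "card S \<le> n - 1" using cardSL by simp
    have "r ^ card S * (A / 2 ^ (n + 2) / 2 ^ card Lg) \<le> r ^ card S * (PiL / 2 ^ card Lg)"
      using PiLlow rpos by (intro mult_left_mono divide_right_mono) auto
    also have "\<dots> \<le> 3 * A * (2 * r) ^ n" using low1 up1 by simp
    finally have ineq: "r ^ card S * (A / 2 ^ (n + 2) / 2 ^ card Lg) \<le> 3 * A * (2 * r) ^ n" .
    have cLg: "card Lg \<le> n + 1" using cardSL by simp
    have "r ^ (n - 1) \<le> r ^ card S" using cS rpos r1 by (intro power_decreasing) auto
    have "r ^ (n - 1) * A \<le> r ^ card S * A" using \<open>r ^ (n - 1) \<le> r ^ card S\<close> A8 by simp
    also have "\<dots> \<le> 3 * A * (2 * r) ^ n * (2 ^ (n + 2) * 2 ^ card Lg)"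
      using ineq by (simp add: field_simps)
    also have "\<dots> \<le> 3 * A * (2 * r) ^ n * (2 ^ (n + 2) * 2 ^ (n + 1))"
    proof -
      have "(2::real) ^ card Lg \<le> 2 ^ (n + 1)" using cLg by (intro power_increasing) auto
      then show ?thesis using A8 rpos by (intro mult_left_mono) auto
    qed
    also have "\<dots> = 3 * A * r ^ n * ((2::real) ^ n * (2 ^ (n + 2) * 2 ^ (n + 1)))"
      by (simp add: power_mult_distrib mult_ac)
    also have "(2::real) ^ n * (2 ^ (n + 2) * 2 ^ (n + 1)) = 2 ^ (n + (n + 2) + (n + 1))"
      by (simp add: power_add)
    also have "n + (n + 2) + (n + 1) = 3 * n + 3" by simp
    also have "3 * A * r ^ n * 2 ^ (3 * n + 3) = A * (r ^ n * (3 * 2 ^ (3 * n + 3)))"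
      by (simp add: mult_ac)
    finally have "r ^ (n - 1) \<le> r ^ n * (3 * 2 ^ (3 * n + 3))" using A8 by simp
    moreover have "r ^ n = r ^ (n - 1) * r" using n1 by (metis Suc_diff_1 less_le_trans zero_less_one power_Suc2)
    ultimately have "r ^ (n - 1) * 1 \<le> r ^ (n - 1) * (r * (3 * 2 ^ (3 * n + 3)))" by (simp add: mult_ac)
    then have "1 \<le> r * (3 * 2 ^ (3 * n + 3))" using rpos by (simp add: mult_le_cancel_left_pos)
    then have "Q0 ^ 2 \<le> 3 * 2 ^ (3 * n + 3)" unfolding r_def using Q01 by (simp add: field_simps)
    then show False using Qbig by simp
  qed
  obtain i0 where i0: "i0 < n + 1" "\<forall>j\<in>Lg. j = i0"
  proof (cases "Lg = {}")
    case True then show ?thesis using that[of 0] by simp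
  next
    case False
    then obtain j where j: "j \<in> Lg" by blast
    have "\<forall>k\<in>Lg. k = j" using card_le_Suc0_iff_eq[OF finS(2)] cardLg j by auto
    moreover have "j < n + 1" using j unfolding Lg_def by simp
    ultimately show ?thesis using that[of j] by blast
  qed
  define \<alpha> where "\<alpha> = root i0"
  have r\<alpha>: "poly (map_poly of_int P) \<alpha> = 0" using root_is[OF i0(1)] unfolding \<alpha>_def Pc_def .
  have mip: "min_int_poly \<alpha> = P" by (rule min_int_poly_eq[OF irr _ r\<alpha>]) (simp add: lP)
  have P0: "P \<noteq> 0" using lP by auto
  have alg: "is_algebraic \<alpha>" unfolding is_algebraic_def using P0 r\<alpha> by blast
  have aint: "algebraic_integer \<alpha>" unfolding algebraic_integer_def using lP r\<alpha> by blast
  have deg: "alg_degree \<alpha> = n + 1" unfolding alg_degree_def mip dP ..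
  have conj: "\<forall>\<beta>\<in>conjugates \<alpha> - {\<alpha>}. cmod (complex_of_real \<xi> - \<beta>) < 1 / Q0^2"
  proof
    fix \<beta> assume "\<beta> \<in> conjugates \<alpha> - {\<alpha>}"
    then have b: "poly Pc \<beta> = 0" "\<beta> \<noteq> \<alpha>" unfolding conjugates_def mip Pc_def by auto
    then obtain j where j: "j < n + 1" "\<beta> = root j" using roots_are by blast
    have "j \<notin> Lg"
    proof
      assume "j \<in> Lg"
      then have "j = i0" using i0(2) by blast
      then show False using j(2) b(2) unfolding \<alpha>_def by simp
    qed
    then have "j \<in> S" using j(1) unfolding S_def Lg_def by auto
    then show "cmod (complex_of_real \<xi> - \<beta>) < 1 / Q0^2" using j(2) unfolding S_def r_def
      by (simp add: norm_minus_commute)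
  qed
  have H: "alg_height \<alpha> = poly_height P" unfolding alg_height_def mip ..
  have Hnn: "0 \<le> poly_height P" using height_ge[of P 0] by linarith
  have "A / 2 \<le> cmod (poly Pc z2)" by (rule low2)
  also have "\<dots> \<le> l1 Pc * max 1 (cmod z2) ^ degree Pc" by (rule poly_le_l1)
  also have "\<dots> \<le> ((real n + 1) + 1) * real_of_int (poly_height P) * (\<bar>\<xi>\<bar> + 1) ^ (n + 1)"
  proof (intro mult_mono)
    show "l1 Pc \<le> ((real n + 1) + 1) * real_of_int (poly_height P)"
      using l1_le_height[of P] dP unfolding Pc_def by simp
    have "cmod z2 = \<bar>\<xi> + 1\<bar>" unfolding z2_def by (simp only: norm_of_real)
    then have "cmod z2 \<le> \<bar>\<xi>\<bar> + 1" by linarith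
    then show "max 1 (cmod z2) ^ degree Pc \<le> (\<bar>\<xi>\<bar> + 1) ^ (n + 1)" unfolding dPc
      by (intro power_mono) auto
  qed (auto simp: l1_nonneg Hnn)
  finally have "A / 2 \<le> (real n + 2) * real_of_int (poly_height P) * (\<bar>\<xi>\<bar> + 1) ^ (n + 1)"
    by (simp add: add.assoc)
  then have lowA0: "A \<le> 2 * ((real n + 2) * real_of_int (poly_height P) * (\<bar>\<xi>\<bar> + 1) ^ (n + 1))"
    by linarith
  have eqD: "2 * ((real n + 2) * real_of_int (poly_height P) * (\<bar>\<xi>\<bar> + 1) ^ (n + 1))
      = (2 * (real n + 2) * (\<bar>\<xi>\<bar> + 1) ^ (n + 1)) * real_of_int (poly_height P)"
    by (simp only: mult_ac)
  have lowA: "A \<le> (2 * (real n + 2) * (\<bar>\<xi>\<bar> + 1) ^ (n + 1)) * real_of_int (poly_height P)"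
    using lowA0 unfolding eqD .
  have Dpos: "2 * (real n + 2) * (\<bar>\<xi>\<bar> + 1) ^ (n + 1) > 0" by simp
  have low: "M / (2 * (real n + 2) * (\<bar>\<xi>\<bar> + 1) ^ (n + 1)) * Q0 ^ n \<le> real_of_int (alg_height \<alpha>)"
  proof -
    have "M / (2 * (real n + 2) * (\<bar>\<xi>\<bar> + 1) ^ (n + 1)) * Q0 ^ n = A / (2 * (real n + 2) * (\<bar>\<xi>\<bar> + 1) ^ (n + 1))"
      unfolding A_def by simp
    also have "\<dots> \<le> real_of_int (poly_height P)" using lowA Dpos by (subst pos_divide_le_eq) (simp_all add: mult.commute)
    finally show ?thesis unfolding H .
  qed
  define KB where "KB = ((1 + \<bar>\<xi>\<bar>) ^ n * (M + \<bar>\<xi>\<bar> + 1) + 2 * (real n + 1) * (C * (\<bar>\<xi>\<bar> + 2)) ^ n) * Q0 ^ n"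
  have "l1 Pc \<le> l1 G + l1 (smult 4 E)" unfolding Pc_def PC by (rule l1_add)
  also have "\<dots> \<le> (1 + \<bar>\<xi>\<bar>) ^ n * (A + \<bar>\<xi>\<bar> + 1) + 4 * ((real n + 1) / 2 * (C * (\<bar>\<xi>\<bar> + 2)) ^ n * Q0 ^ n)"
  proof (intro add_mono)
    have "l1 G \<le> l1 (L ^ n) * l1 [:complex_of_real (A - \<xi>), 1:]" unfolding G_def by (rule l1_mult)
    also have "\<dots> \<le> (1 + \<bar>\<xi>\<bar>) ^ n * (A + \<bar>\<xi>\<bar> + 1)"
    proof (intro mult_mono)
      show "l1 (L ^ n) \<le> (1 + \<bar>\<xi>\<bar>) ^ n" using l1_power[of L n] by (simp add: L_def l1_lin add.commute)
      have "\<bar>A - \<xi>\<bar> \<le> A + \<bar>\<xi>\<bar>" using A8 by simp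
      moreover have "l1 [:complex_of_real (A - \<xi>), 1:] = \<bar>A - \<xi>\<bar> + 1"
        by (simp only: l1_lin norm_of_real norm_one)
      ultimately show "l1 [:complex_of_real (A - \<xi>), 1:] \<le> A + \<bar>\<xi>\<bar> + 1" by linarith
    qed (auto simp: l1_nonneg)
    finally show "l1 G \<le> (1 + \<bar>\<xi>\<bar>) ^ n * (A + \<bar>\<xi>\<bar> + 1)" .
    show "l1 (smult 4 E) \<le> 4 * ((real n + 1) / 2 * (C * (\<bar>\<xi>\<bar> + 2)) ^ n * Q0 ^ n)"
      unfolding E_def using err_l1[OF R(2)] by (simp add: l1_smult mult_ac)
  qed
  also have "\<dots> \<le> KB"
  proof -
    have f1: "\<bar>\<xi>\<bar> + 1 \<le> (\<bar>\<xi>\<bar> + 1) * Q0 ^ n" using mult_left_mono[OF Q0n, of "\<bar>\<xi>\<bar> + 1"] by simp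
    have f2: "(M + \<bar>\<xi>\<bar> + 1) * Q0 ^ n = A + (\<bar>\<xi>\<bar> + 1) * Q0 ^ n" unfolding A_def by (simp add: algebra_simps)
    have "A + \<bar>\<xi>\<bar> + 1 \<le> (M + \<bar>\<xi>\<bar> + 1) * Q0 ^ n" using f1 f2 by linarith
    then have "(1 + \<bar>\<xi>\<bar>) ^ n * (A + \<bar>\<xi>\<bar> + 1) \<le> (1 + \<bar>\<xi>\<bar>) ^ n * ((M + \<bar>\<xi>\<bar> + 1) * Q0 ^ n)"
      by (intro mult_left_mono) auto
    moreover have k: "KB = (1 + \<bar>\<xi>\<bar>) ^ n * ((M + \<bar>\<xi>\<bar> + 1) * Q0 ^ n) + 2 * (real n + 1) * (C * (\<bar>\<xi>\<bar> + 2)) ^ n * Q0 ^ n"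
      unfolding KB_def by (simp add: algebra_simps)
    moreover have e: "4 * ((real n + 1) / 2 * (C * (\<bar>\<xi>\<bar> + 2)) ^ n * Q0 ^ n) = 2 * (real n + 1) * (C * (\<bar>\<xi>\<bar> + 2)) ^ n * Q0 ^ n"
      by simp
    ultimately show ?thesis by linarith
  qed
  finally have l1P: "l1 Pc \<le> KB" .
  have "\<bar>coeff P k\<bar> \<le> KB" for k
  proof -
    have "real_of_int \<bar>coeff P k\<bar> = cmod (coeff Pc k)" unfolding Pc_def by (simp add: coeff_mpi)
    also have "\<dots> \<le> KB" using coeff_le_l1 l1P order.trans by blast
    finally show ?thesis by simp
  qed
  then have up: "real_of_int (alg_height \<alpha>) \<le> KB"
    unfolding H by (meson height_le floor_le_iff le_floor_iff order_refl)
  show ?thesis using alg aint deg conj low up unfolding KB_def M_def K0_def by blast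
qed

end




lemma dist_conv:
  fixes H K Q0 :: real and n :: nat
  assumes H: "0 < H" "H \<le> K * Q0 ^ n" and K: "K > 0" and Q: "Q0 > 0" and n: "n \<ge> 1"
  shows "1 / Q0^2 \<le> K powr (2 / real n) * H powr (-2 / real n)"
proof -
  have KQ: "K * Q0 ^ n > 0" using K Q by simp
  have "(K * Q0 ^ n) powr (-2 / real n) \<le> H powr (-2 / real n)"
    by (rule powr_mono2') (use H n in auto)
  moreover have "(K * Q0 ^ n) powr (-2 / real n) = K powr (-2 / real n) * Q0 powr (-2)"
  proof -
    have "(K * Q0 ^ n) powr (-2 / real n) = K powr (-2 / real n) * (Q0 ^ n) powr (-2 / real n)"
      using K Q by (simp add: powr_mult)
    also have "(Q0 ^ n) powr (-2 / real n) = (Q0 powr real n) powr (-2 / real n)"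
      using Q by (simp add: powr_realpow)
    also have "\<dots> = Q0 powr (real n * (-2 / real n))" by (simp add: powr_powr)
    also have "real n * (-2 / real n) = -2" using n by simp
    finally show ?thesis .
  qed
  ultimately have "K powr (-2 / real n) * Q0 powr (-2) \<le> H powr (-2 / real n)" by simp
  then have ineq: "K powr (2 / real n) * (K powr (-2 / real n) * Q0 powr (-2)) \<le> K powr (2 / real n) * H powr (-2 / real n)"
    by (rule mult_left_mono) simp
  have e1: "K powr (2 / real n) * (K powr (-2 / real n) * Q0 powr (-2)) = Q0 powr (-2)"
    using K by (simp add: powr_add[symmetric] mult.assoc[symmetric])
  have e2: "Q0 powr (-2) = 1 / Q0^2" using Q by (simp add: powr_minus powr_realpow divide_inverse)
  show ?thesis using ineq[unfolded e1] unfolding e2 .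
qed




theorem theoremB:
  fixes \<xi> :: real and n :: nat
  assumes "badly_approximable \<xi>" and "n \<ge> 1"
  shows "\<exists>c1 c2 c3 c4 :: real. c1 > 0 \<and> c2 > 0 \<and> c3 > 0 \<and> c4 > 0 \<and>
    (\<forall>X::real. X \<ge> 1 \<longrightarrow>
      (\<exists>\<alpha>. is_algebraic \<alpha> \<and> alg_degree \<alpha> = n \<and>
         (\<forall>\<beta>\<in>conjugates \<alpha>. cmod (complex_of_real \<xi> - \<beta>) \<le> c1 * real_of_int (alg_height \<alpha>) powr (-2 / real n)) \<and>
         c3 * X \<le> real_of_int (alg_height \<alpha>) \<and> real_of_int (alg_height \<alpha>) \<le> c4 * X) \<and>
      (\<exists>\<alpha>. is_algebraic \<alpha> \<and> algebraic_integer \<alpha> \<and> alg_degree \<alpha> = n + 1 \<and>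
         (\<forall>\<beta>\<in>conjugates \<alpha> - {\<alpha>}. cmod (complex_of_real \<xi> - \<beta>) \<le> c2 * real_of_int (alg_height \<alpha>) powr (-2 / real n)) \<and>
         c3 * X \<le> real_of_int (alg_height \<alpha>) \<and> real_of_int (alg_height \<alpha>) \<le> c4 * X))"
proof -
  note n1 = assms(2)
  obtain C where C1: "C \<ge> 1" and lat: "\<And>Q0. Q0 \<ge> 1 \<Longrightarrow> \<exists>(p::int) (q::int) (p'::int) (q'::int). p * q' - p' * q = 1 \<and> q > 0 \<and>
        \<bar>real_of_int q\<bar> \<le> C * Q0 \<and> \<bar>real_of_int q'\<bar> \<le> C * Q0 \<and> \<bar>of_int q * \<xi> - of_int p\<bar> \<le> C / Q0 \<and> \<bar>of_int q' * \<xi> - of_int p'\<bar> \<le> C / Q0"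
    using lattice2[OF assms(1)] by blast
  define K0 where "K0 = (real n + 1) / 2 * (2 * C) ^ n"
  define KA where "KA = (2 * (real n + 1) * (2 * C) ^ n + 1) * (1 + \<bar>\<xi>\<bar>) ^ n + 2 * (real n + 1) * (C * (\<bar>\<xi>\<bar> + 2)) ^ n"
  define KBl where "KBl = (8 * K0 + 8) / (2 * (real n + 2) * (\<bar>\<xi>\<bar> + 1) ^ (n + 1))"
  define KBu where "KBu = (1 + \<bar>\<xi>\<bar>) ^ n * (8 * K0 + 8 + \<bar>\<xi>\<bar> + 1) + 2 * (real n + 1) * (C * (\<bar>\<xi>\<bar> + 2)) ^ n"
  define Qm where "Qm = C + 3 * 2 ^ (3 * n + 3)"
  define cl where "cl = min (1 / (2 * C) ^ n) KBl"
  define cu where "cu = max KA KBu * Qm ^ n"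
  have K0pos: "K0 > 0" unfolding K0_def using C1 by simp
  have KApos: "KA > 0" unfolding KA_def using C1 n1 by (intro add_pos_pos mult_pos_pos) auto
  have KBupos: "KBu > 0" unfolding KBu_def using C1 K0pos n1 by (intro add_pos_nonneg mult_pos_pos) auto
  have KBlpos: "KBl > 0" unfolding KBl_def using K0pos by (intro divide_pos_pos mult_pos_pos) auto
  have clpos: "cl > 0" unfolding cl_def using KBlpos C1 by simp
  have p2: "(0::real) < 3 * 2 ^ (3 * n + 3)" by simp
  have Qm1: "Qm \<ge> 1" unfolding Qm_def using C1 p2 by linarith
  have cupos: "cu > 0" unfolding cu_def using KApos KBupos Qm1 by (simp add: max_def)
  have main: "(\<exists>\<alpha>. is_algebraic \<alpha> \<and> alg_degree \<alpha> = n \<and>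
         (\<forall>\<beta>\<in>conjugates \<alpha>. cmod (complex_of_real \<xi> - \<beta>) \<le> KA powr (2 / real n) * real_of_int (alg_height \<alpha>) powr (-2 / real n)) \<and>
         cl * X \<le> real_of_int (alg_height \<alpha>) \<and> real_of_int (alg_height \<alpha>) \<le> cu * X) \<and>
      (\<exists>\<alpha>. is_algebraic \<alpha> \<and> algebraic_integer \<alpha> \<and> alg_degree \<alpha> = n + 1 \<and>
         (\<forall>\<beta>\<in>conjugates \<alpha> - {\<alpha>}. cmod (complex_of_real \<xi> - \<beta>) \<le> KBu powr (2 / real n) * real_of_int (alg_height \<alpha>) powr (-2 / real n)) \<and>
         cl * X \<le> real_of_int (alg_height \<alpha>) \<and> real_of_int (alg_height \<alpha>) \<le> cu * X)"
    if X1: "X \<ge> 1" for X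
  proof -
    define Q0 where "Q0 = max Qm (root n X)"
    have Q0m: "Q0 \<ge> Qm" unfolding Q0_def by simp
    have Q01: "Q0 \<ge> 1" using Q0m Qm1 by simp
    have QC: "Q0 > C" using Q0m p2 unfolding Qm_def by linarith
    have Qbig: "Q0^2 > 3 * 2 ^ (3 * n + 3)"
    proof -
      have "Q0 \<le> Q0^2" using Q01 by (simp add: power2_eq_square)
      moreover have "Q0 > 3 * 2 ^ (3 * n + 3)" using Q0m C1 unfolding Qm_def by linarith
      ultimately show ?thesis by simp
    qed
    have rX: "root n X ^ n = X" using n1 X1 by (intro real_root_pow_pos2) auto
    have XQ: "X \<le> Q0 ^ n"
    proof -
      have "root n X \<ge> 0" using X1 by (intro real_root_ge_zero) simp
      then have "root n X ^ n \<le> Q0 ^ n" unfolding Q0_def by (intro power_mono) auto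
      then show ?thesis using rX by simp
    qed
    have QX: "Q0 ^ n \<le> Qm ^ n * X"
    proof (cases "Qm \<ge> root n X")
      case True
      then have "Q0 = Qm" unfolding Q0_def by simp
      then show ?thesis using X1 Qm1 by (simp add: mult_le_cancel_left1)
    next
      case False
      then have "Q0 = root n X" unfolding Q0_def by simp
      then have "Q0 ^ n = X" using rX by simp
      moreover have "Qm ^ n \<ge> 1" using Qm1 by simp
      ultimately show ?thesis using X1 by (simp add: mult_le_cancel_right1)
    qed
    obtain p q p' q' :: int where pq: "p * q' - p' * q = 1" "q > 0" "\<bar>real_of_int q\<bar> \<le> C * Q0"
      "\<bar>real_of_int q'\<bar> \<le> C * Q0" "\<bar>of_int q * \<xi> - of_int p\<bar> \<le> C / Q0" "\<bar>of_int q' * \<xi> - of_int p'\<bar> \<le> C / Q0"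
      using lat[OF Q01] by blast
    have Q0pos: "Q0 > 0" using Q01 by simp
    have Q0npos: "Q0 ^ n > 0" using Q0pos by simp
    obtain \<alpha> where a: "is_algebraic \<alpha>" "alg_degree \<alpha> = n"
      "\<forall>\<beta>\<in>conjugates \<alpha>. cmod (complex_of_real \<xi> - \<beta>) < 1 / Q0^2"
      "(Q0 / (2 * C)) ^ n \<le> real_of_int (alg_height \<alpha>)"
      "real_of_int (alg_height \<alpha>) \<le> KA * Q0 ^ n"
      using partA[OF n1 pq(1,2) C1 Q01 pq(3-6) QC] unfolding KA_def by blast
    have lowa: "cl * X \<le> real_of_int (alg_height \<alpha>)"
    proof -
      have "cl * X \<le> 1 / (2 * C) ^ n * Q0 ^ n" unfolding cl_def using XQ X1 C1
        by (intro mult_mono) auto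
      also have "\<dots> = (Q0 / (2 * C)) ^ n" by (simp add: power_divide)
      finally show ?thesis using a(4) by simp
    qed
    have Ha: "real_of_int (alg_height \<alpha>) > 0" using lowa clpos X1 by (smt (verit) mult_pos_pos)
    have upa: "real_of_int (alg_height \<alpha>) \<le> cu * X"
    proof -
      have "KA * Q0 ^ n \<le> KA * (Qm ^ n * X)" using QX KApos by simp
      also have "\<dots> \<le> cu * X" unfolding cu_def using X1 Qm1 KApos
        by (simp add: mult.assoc[symmetric]; intro mult_right_mono; simp)
      finally show ?thesis using a(5) by simp
    qed
    have dista: "\<forall>\<beta>\<in>conjugates \<alpha>. cmod (complex_of_real \<xi> - \<beta>) \<le> KA powr (2 / real n) * real_of_int (alg_height \<alpha>) powr (-2 / real n)"
    proof
      fix \<beta> assume "\<beta> \<in> conjugates \<alpha>"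
      then have "cmod (complex_of_real \<xi> - \<beta>) < 1 / Q0^2" using a(3) by blast
      also have "1 / Q0^2 \<le> KA powr (2 / real n) * real_of_int (alg_height \<alpha>) powr (-2 / real n)"
        by (rule dist_conv[OF Ha a(5) KApos Q0pos n1])
      finally show "cmod (complex_of_real \<xi> - \<beta>) \<le> KA powr (2 / real n) * real_of_int (alg_height \<alpha>) powr (-2 / real n)"
        by simp
    qed
    obtain \<gamma> where b: "is_algebraic \<gamma>" "algebraic_integer \<gamma>" "alg_degree \<gamma> = n + 1"
      "\<forall>\<beta>\<in>conjugates \<gamma> - {\<gamma>}. cmod (complex_of_real \<xi> - \<beta>) < 1 / Q0^2"
      "KBl * Q0 ^ n \<le> real_of_int (alg_height \<gamma>)"
      "real_of_int (alg_height \<gamma>) \<le> KBu * Q0 ^ n"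
      using partB[OF n1 pq(1,2) C1 Q01 pq(3-6) QC Qbig] unfolding KBl_def KBu_def K0_def by blast
    have lowb: "cl * X \<le> real_of_int (alg_height \<gamma>)"
    proof -
      have "cl * X \<le> KBl * Q0 ^ n" unfolding cl_def using XQ X1 KBlpos
        by (intro mult_mono) auto
      then show ?thesis using b(5) by simp
    qed
    have Hb: "real_of_int (alg_height \<gamma>) > 0" using lowb clpos X1 by (smt (verit) mult_pos_pos)
    have upb: "real_of_int (alg_height \<gamma>) \<le> cu * X"
    proof -
      have "KBu * Q0 ^ n \<le> KBu * (Qm ^ n * X)" using QX KBupos by simp
      also have "\<dots> \<le> cu * X" unfolding cu_def using X1 Qm1 KBupos
        by (simp add: mult.assoc[symmetric]; intro mult_right_mono; simp)
      finally show ?thesis using b(6) by simp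
    qed
    have distb: "\<forall>\<beta>\<in>conjugates \<gamma> - {\<gamma>}. cmod (complex_of_real \<xi> - \<beta>) \<le> KBu powr (2 / real n) * real_of_int (alg_height \<gamma>) powr (-2 / real n)"
    proof
      fix \<beta> assume "\<beta> \<in> conjugates \<gamma> - {\<gamma>}"
      then have "cmod (complex_of_real \<xi> - \<beta>) < 1 / Q0^2" using b(4) by blast
      also have "1 / Q0^2 \<le> KBu powr (2 / real n) * real_of_int (alg_height \<gamma>) powr (-2 / real n)"
        by (rule dist_conv[OF Hb b(6) KBupos Q0pos n1])
      finally show "cmod (complex_of_real \<xi> - \<beta>) \<le> KBu powr (2 / real n) * real_of_int (alg_height \<gamma>) powr (-2 / real n)"
        by simp
    qed
    show ?thesis using a(1,2) dista lowa upa b(1,2,3) distb lowb upb by blast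
  qed
  have "KA powr (2 / real n) > 0" "KBu powr (2 / real n) > 0" using KApos KBupos by auto
  then show ?thesis using clpos cupos main by blast
qed


end
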